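(* Let $z$ be a nonzero element of $Z_{\mathrm{gr}}(E(\Lambda_{\mathbf{q}}))$ which is homogeneous both for the length grading and for the $\mathbb{Z}$-grading in which $a_i$ has degree $1$, $\bar a_i$ degree $-1$ and $e_i$ degree $0$. Then there are integers $s, t \geqslant 0$ with $s \equiv t \pmod m$ and $c_0 \in K^*$ such that $z = \sum_{i=0}^{m-1} c_i \gamma_i^{s}\delta_i^{t}$ where, for $i = 0, \ldots, m-1$, $$c_i = (-1)^{is}\prod_{k=1}^{i}(q_k\cdots q_{k+t-1})^{-1}c_0 = (-1)^{it}\prod_{k=1}^{i}(q_k\cdots q_{k+s-1})^{-1}c_0,$$ and moreover $\zeta^{s} = (-1)^{mt}$ and $\zeta^{t} = (-1)^{ms}$.
   Context: Let $K$ be a field, $m \geqslant 1$, $\mathcal{Q}$ the quiver with vertices $0, \ldots, m-1$ (indices modulo $m$), arrows $a_i: i\to i+1$, $\bar a_i: i+1\to i$, trivial paths $e_i$; paths written left to right. For $\mathbf{q}=(q_0,\dots,q_{m-1})\in(K^* )^m$, $\Lambda_{\mathbf{q}} = K\mathcal{Q}/I_{\mathbf{q}}$ with $I_{\mathbf{q}}$ generated by $a_ia_{i+1}$, $\bar a_{i-1}\bar a_{i-2}$, $q_ia_i\bar a_i - \bar a_{i-1}a_{i-1}$; $\zeta = q_0\cdots q_{m-1}$; indices of the $q_k$ are taken modulo $m$. $E(\Lambda_{\mathbf{q}}) = \operatorname{Ext}^*_{\Lambda_{\mathbf{q}}}(\Lambda_{\mathbf{q}}/\mathfrak{r}, \Lambda_{\mathbf{q}}/\mathfrak{r})$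 ($\mathfrak r$ the Jacobson radical) with Yoneda product; since $\Lambda_{\mathbf q}$ is Koszul, it is identified with $K\mathcal{Q}$ modulo the ideal generated by $q_i^{-1}a_i\bar a_i + \bar a_{i-1}a_{i-1}$, $i=0,\dots,m-1$, graded by path length (length $n$ corresponding to $\operatorname{Ext}^n$). Write $\gamma_i^n = a_ia_{i+1}\cdots a_{i+n-1}$ and $\delta_i^n = \bar a_{i+n-1}\cdots\bar a_{i+1}\bar a_i$ (paths of length $n$; $\gamma_i^0=\delta_i^0=e_i$). The graded centre $Z_{\mathrm{gr}}(E)$ is the subalgebra generated by homogeneous $z$ of length $n$ with $zg = (-1)^{nk}gz$ for all homogeneous $g$ of length $k$. *)

theory Defs
  imports Main
begin

text \<open>Arrows of the quiver Q with vertices 0..m-1: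
  A j is a_j : j -> j+1 (mod m), B j is bar a_j : j+1 -> j (mod m).\<close>
datatype arr = A nat | B nat

fun src :: "nat \<Rightarrow> arr \<Rightarrow> nat" where
  "src m (A j) = j"
| "src m (B j) = Suc j mod m"

fun tgt :: "nat \<Rightarrow> arr \<Rightarrow> nat" where
  "tgt m (A j) = Suc j mod m"
| "tgt m (B j) = j"

fun arr_ok :: "nat \<Rightarrow> arr \<Rightarrow> bool" where
  "arr_ok m (A j) = (j < m)"
| "arr_ok m (B j) = (j < m)"

text \<open>A path is (start vertex, list of arrows), composed left to right;
  (i, []) is the trivial path e_i.\<close>
type_synonym path = "nat \<times> arr list"

fun valid_walk :: "nat \<Rightarrow> nat \<Rightarrow> arr list \<Rightarrow> bool" where
  "valid_walk m v [] = (v < m)"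
| "valid_walk m v (x # xs) =
     (v < m \<and> arr_ok m x \<and> src m x = v \<and> valid_walk m (tgt m x) xs)"

fun endpt :: "nat \<Rightarrow> nat \<Rightarrow> arr list \<Rightarrow> nat" where
  "endpt m v [] = v"
| "endpt m v (x # xs) = endpt m (tgt m x) xs"

definition valid_path :: "nat \<Rightarrow> path \<Rightarrow> bool" where
  "valid_path m p = valid_walk m (fst p) (snd p)"

text \<open>Product of paths (left to right); None means the product is zero.\<close>
definition pmul :: "nat \<Rightarrow> path \<Rightarrow> path \<Rightarrow> path option" where
  "pmul m p p' = (if endpt m (fst p) (snd p) = fst p'
                  then Some (fst p, snd p @ snd p') else None)"

text \<open>The path algebra KQ: finitely supported K-valued functions on valid paths.\<close>
definition KQ :: "nat \<Rightarrow> (path \<Rightarrow> 'k::field) set" where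
  "KQ m = {f. finite {p. f p \<noteq> 0} \<and> (\<forall>p. f p \<noteq> 0 \<longrightarrow> valid_path m p)}"

definition conv :: "nat \<Rightarrow> (path \<Rightarrow> 'k::field) \<Rightarrow> (path \<Rightarrow> 'k) \<Rightarrow> path \<Rightarrow> 'k" where
  "conv m f g r = (\<Sum>pp \<in> {(p, p'). f p \<noteq> 0 \<and> g p' \<noteq> 0 \<and> pmul m p p' = Some r}.
                      f (fst pp) * g (snd pp))"

definition pv :: "path \<Rightarrow> path \<Rightarrow> 'k::field" where
  "pv p = (\<lambda>r. if r = p then 1 else 0)"

text \<open>Generator of the relations of E: q_i^{-1} a_i abar_i + abar_{i-1} a_{i-1}.\<close>
definition relE :: "nat \<Rightarrow> (nat \<Rightarrow> 'k::field) \<Rightarrow> nat \<Rightarrow> path \<Rightarrow> 'k" where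
  "relE m q i = (\<lambda>r. (if r = (i, [A i, B i]) then inverse (q i) else 0)
                  + (if r = (i, [B ((i + m - 1) mod m), A ((i + m - 1) mod m)]) then 1 else 0))"

text \<open>The two-sided ideal of KQ generated by the relations (K-span of p * rel_i * p').\<close>
inductive_set IdE :: "nat \<Rightarrow> (nat \<Rightarrow> 'k::field) \<Rightarrow> (path \<Rightarrow> 'k) set"
  for m :: nat and q :: "nat \<Rightarrow> 'k" where
  zero: "(\<lambda>_. 0) \<in> IdE m q"
| step: "\<lbrakk>x \<in> IdE m q; valid_path m p; valid_path m p'; i < m\<rbrakk> \<Longrightarrow>
          (\<lambda>r. x r + c * conv m (conv m (pv p) (relE m q i)) (pv p') r) \<in> IdE m q"

definition plen :: "path \<Rightarrow> nat" where
  "plen p = length (snd p)"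

definition zdeg :: "path \<Rightarrow> int" where
  "zdeg p = int (length (filter (\<lambda>x. case x of A _ \<Rightarrow> True | B _ \<Rightarrow> False) (snd p)))
          - int (length (filter (\<lambda>x. case x of A _ \<Rightarrow> False | B _ \<Rightarrow> True) (snd p)))"

text \<open>x (an element of KQ representing a class in E) is homogeneous of length n in E.\<close>
definition len_hom :: "nat \<Rightarrow> (nat \<Rightarrow> 'k::field) \<Rightarrow> nat \<Rightarrow> (path \<Rightarrow> 'k) \<Rightarrow> bool" where
  "len_hom m q n x = (\<exists>y \<in> KQ m. (\<lambda>r. x r - y r) \<in> IdE m q \<and> (\<forall>p. y p \<noteq> 0 \<longrightarrow> plen p = n))"

definition bi_hom :: "nat \<Rightarrow> (nat \<Rightarrow> 'k::field) \<Rightarrow> nat \<Rightarrow> int \<Rightarrow> (path \<Rightarrow> 'k) \<Rightarrow> bool" where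
  "bi_hom m q n d x = (\<exists>y \<in> KQ m. (\<lambda>r. x r - y r) \<in> IdE m q \<and>
       (\<forall>p. y p \<noteq> 0 \<longrightarrow> plen p = n \<and> zdeg p = d))"

text \<open>Graded centre Z_gr(E): subalgebra generated by homogeneous graded-commuting elements
  (as a set of representatives in KQ, closed under congruence modulo the ideal).\<close>
inductive_set Zgr :: "nat \<Rightarrow> (nat \<Rightarrow> 'k::field) \<Rightarrow> (path \<Rightarrow> 'k) set"
  for m :: nat and q :: "nat \<Rightarrow> 'k" where
  gen: "\<lbrakk>x \<in> KQ m; len_hom m q n x;
         \<And>g k. g \<in> KQ m \<Longrightarrow> (\<forall>p. g p \<noteq> 0 \<longrightarrow> plen p = k) \<Longrightarrow>
            (\<lambda>r. conv m x g r - (-1) ^ (n * k) * conv m g x r) \<in> IdE m q\<rbrakk>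
        \<Longrightarrow> x \<in> Zgr m q"
| one: "(\<lambda>r. \<Sum>i<m. pv (i, []) r) \<in> Zgr m q"
| add: "\<lbrakk>x \<in> Zgr m q; y \<in> Zgr m q\<rbrakk> \<Longrightarrow> (\<lambda>r. x r + y r) \<in> Zgr m q"
| mul: "\<lbrakk>x \<in> Zgr m q; y \<in> Zgr m q\<rbrakk> \<Longrightarrow> conv m x y \<in> Zgr m q"
| smul: "x \<in> Zgr m q \<Longrightarrow> (\<lambda>r. c * x r) \<in> Zgr m q"
| cong: "\<lbrakk>x \<in> Zgr m q; y \<in> KQ m; (\<lambda>r. x r - y r) \<in> IdE m q\<rbrakk> \<Longrightarrow> y \<in> Zgr m q"

text \<open>gamma_i^s = a_i a_{i+1} ... a_{i+s-1} and delta_i^t = abar_{i+t-1} ... abar_i.\<close>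
definition gam :: "nat \<Rightarrow> nat \<Rightarrow> nat \<Rightarrow> path" where
  "gam m i s = (i mod m, map (\<lambda>j. A ((i + j) mod m)) [0..<s])"

definition dlt :: "nat \<Rightarrow> nat \<Rightarrow> nat \<Rightarrow> path" where
  "dlt m i t = ((i + t) mod m, map (\<lambda>j. B ((i + t - 1 - j) mod m)) [0..<t])"

end

theory Submission
  imports Defs
begin


definition supp :: "(path \<Rightarrow> 'k::field) \<Rightarrow> path set" where
  "supp f = {p. f p \<noteq> 0}"

abbreviation fin :: "(path \<Rightarrow> 'k::field) \<Rightarrow> bool" where
  "fin f \<equiv> finite (supp f)"

lemma conv_expand:
  fixes f g :: "path \<Rightarrow> 'k::field"
  assumes "finite S" "finite T" "supp f \<subseteq> S" "supp g \<subseteq> T"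
  shows "conv m f g r = (\<Sum>p\<in>S. \<Sum>p'\<in>T. if pmul m p p' = Some r then f p * g p' else 0)"
proof -
  have "conv m f g r = (\<Sum>pp\<in>S \<times> T. if pmul m (fst pp) (snd pp) = Some r then f (fst pp) * g (snd pp) else 0)"
    unfolding conv_def
    apply (rule sum.mono_neutral_cong_left)
    using assms by (auto simp: supp_def)
  also have "\<dots> = (\<Sum>p\<in>S. \<Sum>p'\<in>T. if pmul m p p' = Some r then f p * g p' else 0)"
    by (simp add: sum.cartesian_product case_prod_beta)
  finally show ?thesis .
qed

lemma endpt_append: "endpt m v (xs @ ys) = endpt m (endpt m v xs) ys"
  by (induction xs arbitrary: v) auto

lemma pmul_Some: "pmul m p p' = Some r \<longleftrightarrow> endpt m (fst p) (snd p) = fst p' \<and> r = (fst p, snd p @ snd p')"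
  by (auto simp: pmul_def)

definition cat :: "path \<Rightarrow> path \<Rightarrow> path" where
  "cat p p' = (fst p, snd p @ snd p')"

lemma supp_conv: "supp (conv m f g) \<subseteq> (\<lambda>(p,p'). cat p p') ` (supp f \<times> supp g)"
proof
  fix r assume "r \<in> supp (conv m f g)"
  hence "conv m f g r \<noteq> 0" by (simp add: supp_def)
  then obtain pp where "pp \<in> {(p, p'). f p \<noteq> 0 \<and> g p' \<noteq> 0 \<and> pmul m p p' = Some r}"
    unfolding conv_def by (meson sum.neutral)
  thus "r \<in> (\<lambda>(p,p'). cat p p') ` (supp f \<times> supp g)"
    by (force simp: supp_def pmul_Some cat_def)
qed

lemma fin_conv: "fin f \<Longrightarrow> fin g \<Longrightarrow> fin (conv m f g)"
  by (rule finite_subset[OF supp_conv]) auto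

lemma conv_lin_left:
  fixes f g h :: "path \<Rightarrow> 'k::field"
  assumes "fin f" "fin g" "fin h"
  shows "conv m (\<lambda>r. a * f r + b * g r) h = (\<lambda>r. a * conv m f h r + b * conv m g h r)"
proof
  fix r
  let ?S = "supp f \<union> supp g"
  have s: "supp (\<lambda>r. a * f r + b * g r) \<subseteq> ?S" by (auto simp: supp_def)
  show "conv m (\<lambda>r. a * f r + b * g r) h r = a * conv m f h r + b * conv m g h r"
    apply (subst conv_expand[OF _ _ s, of "supp h"])
    using assms apply auto[3]
    apply (subst conv_expand[of ?S "supp h"])
    using assms apply auto[4]
    apply (subst conv_expand[of ?S "supp h"])
    using assms apply auto[4]
    by (simp add: sum_distrib_left sum.distrib[symmetric] algebra_simps if_distrib cong: if_cong)
qed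

lemma conv_lin_right:
  fixes f g h :: "path \<Rightarrow> 'k::field"
  assumes "fin f" "fin g" "fin h"
  shows "conv m h (\<lambda>r. a * f r + b * g r) = (\<lambda>r. a * conv m h f r + b * conv m h g r)"
proof
  fix r
  let ?S = "supp f \<union> supp g"
  have s: "supp (\<lambda>r. a * f r + b * g r) \<subseteq> ?S" by (auto simp: supp_def)
  show "conv m h (\<lambda>r. a * f r + b * g r) r = a * conv m h f r + b * conv m h g r"
    apply (subst conv_expand[OF _ _ _ s, of "supp h"])
    using assms apply auto[3]
    apply (subst conv_expand[of "supp h" ?S])
    using assms apply auto[4]
    apply (subst conv_expand[of "supp h" ?S])
    using assms apply auto[4]
    by (simp add: sum_distrib_left sum.distrib[symmetric] algebra_simps if_distrib cong: if_cong)
qed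

lemma conv_zero_left[simp]: "conv m (\<lambda>_. 0) g = (\<lambda>_. 0)"
  by (auto simp: conv_def)
lemma conv_zero_right[simp]: "conv m f (\<lambda>_. 0) = (\<lambda>_. 0)"
  by (auto simp: conv_def)

lemma supp_pv[simp]: "supp (pv p :: path \<Rightarrow> 'k::field) = {p}"
  by (auto simp: supp_def pv_def)

lemma conv_pv_pv:
  "conv m (pv p) (pv p') = (if endpt m (fst p) (snd p) = fst p' then pv (cat p p') else (\<lambda>_. 0::'k::field))"
proof
  fix r
  show "conv m (pv p) (pv p') r = (if endpt m (fst p) (snd p) = fst p' then pv (cat p p') else (\<lambda>_. 0::'k::field)) r"
    apply (subst conv_expand[of "{p}" "{p'}"])
    apply (simp_all only: finite.intros supp_pv order.refl insert_subset, simp_all)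
    by (auto simp: pmul_Some pv_def cat_def)
qed

lemma sum_pmul_collapse:
  assumes "finite U" "\<And>u. pmul m a b = Some u \<Longrightarrow> u \<in> U"
  shows "(\<Sum>u\<in>U. if pmul m a b = Some u then F u else 0) = (case pmul m a b of None \<Rightarrow> 0 | Some u \<Rightarrow> F u)"
proof (cases "pmul m a b")
  case None thus ?thesis by simp
next
  case (Some u0)
  hence "(\<Sum>u\<in>U. if pmul m a b = Some u then F u else 0) = (\<Sum>u\<in>U. if u0 = u then F u else 0)"
    by (intro sum.cong) auto
  also have "\<dots> = F u0" using assms Some by (simp add: sum.delta)
  finally show ?thesis using Some by simp
qed

lemma swap4: "(\<Sum>u\<in>SU. \<Sum>c\<in>SC. \<Sum>a\<in>SA. \<Sum>b\<in>SB. F u c a b) = (\<Sum>c\<in>SC. \<Sum>a\<in>SA. \<Sum>b\<in>SB. \<Sum>u\<in>SU. (F u c a b::'a::comm_monoid_add))"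
proof -
  have "(\<Sum>u\<in>SU. \<Sum>c\<in>SC. \<Sum>a\<in>SA. \<Sum>b\<in>SB. F u c a b) = (\<Sum>c\<in>SC. \<Sum>u\<in>SU. \<Sum>a\<in>SA. \<Sum>b\<in>SB. F u c a b)"
    by (rule sum.swap)
  also have "\<dots> = (\<Sum>c\<in>SC. \<Sum>a\<in>SA. \<Sum>u\<in>SU. \<Sum>b\<in>SB. F u c a b)"
    by (intro sum.cong refl, rule sum.swap)
  also have "\<dots> = (\<Sum>c\<in>SC. \<Sum>a\<in>SA. \<Sum>b\<in>SB. \<Sum>u\<in>SU. F u c a b)"
    by (intro sum.cong refl, rule sum.swap)
  finally show ?thesis .
qed
lemma swap4b: "(\<Sum>a\<in>SA. \<Sum>w\<in>SV. \<Sum>b\<in>SB. \<Sum>c\<in>SC. F a w b c) = (\<Sum>a\<in>SA. \<Sum>b\<in>SB. \<Sum>c\<in>SC. \<Sum>w\<in>SV. (F a w b c::'a::comm_monoid_add))"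
proof -
  have "(\<Sum>a\<in>SA. \<Sum>w\<in>SV. \<Sum>b\<in>SB. \<Sum>c\<in>SC. F a w b c) = (\<Sum>a\<in>SA. \<Sum>b\<in>SB. \<Sum>w\<in>SV. \<Sum>c\<in>SC. F a w b c)"
    by (intro sum.cong refl, rule sum.swap)
  also have "\<dots> = (\<Sum>a\<in>SA. \<Sum>b\<in>SB. \<Sum>c\<in>SC. \<Sum>w\<in>SV. F a w b c)"
    by (intro sum.cong refl, rule sum.swap)
  finally show ?thesis .
qed
lemma swap3: "(\<Sum>a\<in>SA. \<Sum>b\<in>SB. \<Sum>c\<in>SC. F a b c) = (\<Sum>c\<in>SC. \<Sum>a\<in>SA. \<Sum>b\<in>SB. (F a b c::'a::comm_monoid_add))"
proof -
  have "(\<Sum>a\<in>SA. \<Sum>b\<in>SB. \<Sum>c\<in>SC. F a b c) = (\<Sum>a\<in>SA. \<Sum>c\<in>SC. \<Sum>b\<in>SB. F a b c)"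
    by (intro sum.cong refl, rule sum.swap)
  also have "\<dots> = (\<Sum>c\<in>SC. \<Sum>a\<in>SA. \<Sum>b\<in>SB. F a b c)"
    by (rule sum.swap)
  finally show ?thesis .
qed

lemma conv_assoc:
  fixes f g h :: "path \<Rightarrow> 'k::field"
  assumes "fin f" "fin g" "fin h"
  shows "conv m (conv m f g) h = conv m f (conv m g h)"
proof
  fix r
  let ?A = "supp f" and ?B = "supp g" and ?C = "supp h"
  let ?U = "(\<lambda>(p,p'). cat p p') ` (?A \<times> ?B)"
  let ?V = "(\<lambda>(p,p'). cat p p') ` (?B \<times> ?C)"
  have fU: "finite ?U" "finite ?V" using assms by auto
  have sU: "supp (conv m f g) \<subseteq> ?U" "supp (conv m g h) \<subseteq> ?V" by (rule supp_conv)+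
  let ?T = "\<lambda>a b c. if endpt m (fst a) (snd a) = fst b \<and> endpt m (fst b) (snd b) = fst c \<and> r = (fst a, snd a @ snd b @ snd c)
                 then f a * g b * h c else 0"
  have "conv m (conv m f g) h r = (\<Sum>u\<in>?U. \<Sum>c\<in>?C. if pmul m u c = Some r then conv m f g u * h c else 0)"
    by (rule conv_expand) (use assms fU sU in auto)
  also have "\<dots> = (\<Sum>u\<in>?U. \<Sum>c\<in>?C. \<Sum>a\<in>?A. \<Sum>b\<in>?B. if pmul m a b = Some u then (if pmul m u c = Some r then f a * g b * h c else 0) else 0)"
  proof (intro sum.cong refl)
    fix u c
    show "(if pmul m u c = Some r then conv m f g u * h c else 0) = (\<Sum>a\<in>?A. \<Sum>b\<in>?B. if pmul m a b = Some u then (if pmul m u c = Some r then f a * g b * h c else 0) else 0)"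
    apply (subst conv_expand[of ?A ?B]) using assms apply auto[4]
      by (cases "pmul m u c = Some r") (auto simp: sum_distrib_right intro!: sum.cong sum.neutral)
  qed
  also have "\<dots> = (\<Sum>c\<in>?C. \<Sum>a\<in>?A. \<Sum>b\<in>?B. \<Sum>u\<in>?U. if pmul m a b = Some u then (if pmul m u c = Some r then f a * g b * h c else 0) else 0)"
    by (rule swap4)
  also have "\<dots> = (\<Sum>c\<in>?C. \<Sum>a\<in>?A. \<Sum>b\<in>?B. ?T a b c)"
    apply (intro sum.cong refl)
    apply (subst sum_pmul_collapse)
    using fU apply simp
     apply (force simp: pmul_Some cat_def)
    by (auto simp: pmul_def endpt_append split: option.split)
  finally have L: "conv m (conv m f g) h r = (\<Sum>c\<in>?C. \<Sum>a\<in>?A. \<Sum>b\<in>?B. ?T a b c)" .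
  have "conv m f (conv m g h) r = (\<Sum>a\<in>?A. \<Sum>w\<in>?V. if pmul m a w = Some r then f a * conv m g h w else 0)"
    by (rule conv_expand) (use assms fU sU in auto)
  also have "\<dots> = (\<Sum>a\<in>?A. \<Sum>w\<in>?V. \<Sum>b\<in>?B. \<Sum>c\<in>?C. if pmul m b c = Some w then (if pmul m a w = Some r then f a * g b * h c else 0) else 0)"
  proof (intro sum.cong refl)
    fix a w
    show "(if pmul m a w = Some r then f a * conv m g h w else 0) = (\<Sum>b\<in>?B. \<Sum>c\<in>?C. if pmul m b c = Some w then (if pmul m a w = Some r then f a * g b * h c else 0) else 0)"
    apply (subst conv_expand[of ?B ?C]) using assms apply auto[4]
      by (cases "pmul m a w = Some r") (auto simp: sum_distrib_left mult.assoc intro!: sum.cong sum.neutral)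
  qed
  also have "\<dots> = (\<Sum>a\<in>?A. \<Sum>b\<in>?B. \<Sum>c\<in>?C. \<Sum>w\<in>?V. if pmul m b c = Some w then (if pmul m a w = Some r then f a * g b * h c else 0) else 0)"
    by (rule swap4b)
  also have "\<dots> = (\<Sum>a\<in>?A. \<Sum>b\<in>?B. \<Sum>c\<in>?C. ?T a b c)"
    apply (intro sum.cong refl)
    apply (subst sum_pmul_collapse)
    using fU apply simp
     apply (force simp: pmul_Some cat_def)
    by (auto simp: pmul_def endpt_append split: option.split)
  also have "\<dots> = (\<Sum>c\<in>?C. \<Sum>a\<in>?A. \<Sum>b\<in>?B. ?T a b c)"
    by (rule swap3)
  finally show "conv m (conv m f g) h r = conv m f (conv m g h) r" using L by simp
qed


lemma conv_smul_left:
  fixes f h :: "path \<Rightarrow> 'k::field"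
  assumes "fin f" "fin h"
  shows "conv m (\<lambda>r. a * f r) h = (\<lambda>r. a * conv m f h r)"
  using conv_lin_left[OF assms(1) assms(1) assms(2), of m a 0] by simp

lemma conv_smul_right:
  fixes f h :: "path \<Rightarrow> 'k::field"
  assumes "fin f" "fin h"
  shows "conv m h (\<lambda>r. a * f r) = (\<lambda>r. a * conv m h f r)"
  using conv_lin_right[OF assms(1) assms(1) assms(2), of m a 0] by simp

lemma conv_add_left:
  fixes f g h :: "path \<Rightarrow> 'k::field"
  assumes "fin f" "fin g" "fin h"
  shows "conv m (\<lambda>r. f r + g r) h = (\<lambda>r. conv m f h r + conv m g h r)"
  using conv_lin_left[OF assms, of m 1 1] by simp

lemma conv_add_right:
  fixes f g h :: "path \<Rightarrow> 'k::field"
  assumes "fin f" "fin g" "fin h"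
  shows "conv m h (\<lambda>r. f r + g r) = (\<lambda>r. conv m h f r + conv m h g r)"
  using conv_lin_right[OF assms, of m 1 1] by simp

lemma conv_diff_left:
  fixes f g h :: "path \<Rightarrow> 'k::field"
  assumes "fin f" "fin g" "fin h"
  shows "conv m (\<lambda>r. f r - g r) h = (\<lambda>r. conv m f h r - conv m g h r)"
  using conv_lin_left[OF assms, of m 1 "-1"] by simp

lemma conv_diff_right:
  fixes f g h :: "path \<Rightarrow> 'k::field"
  assumes "fin f" "fin g" "fin h"
  shows "conv m h (\<lambda>r. f r - g r) = (\<lambda>r. conv m h f r - conv m h g r)"
  using conv_lin_right[OF assms, of m 1 "-1"] by simp

lemma fin_lin: "fin f \<Longrightarrow> fin g \<Longrightarrow> fin (\<lambda>r. a * f r + b * g r)"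
  by (rule finite_subset[of _ "supp f \<union> supp g"]) (auto simp: supp_def)
lemma fin_add: "fin f \<Longrightarrow> fin g \<Longrightarrow> fin (\<lambda>r. f r + g r)"
  by (rule finite_subset[of _ "supp f \<union> supp g"]) (auto simp: supp_def)
lemma fin_diff: "fin f \<Longrightarrow> fin g \<Longrightarrow> fin (\<lambda>r. f r - g r)"
  by (rule finite_subset[of _ "supp f \<union> supp g"]) (auto simp: supp_def)
lemma fin_smul: "fin f \<Longrightarrow> fin (\<lambda>r. a * f r)"
  by (rule finite_subset[of _ "supp f"]) (auto simp: supp_def)
lemma fin_zero[simp]: "fin (\<lambda>_. 0::'k::field)"
  by (simp add: supp_def)
lemma fin_pv[simp]: "fin (pv p :: path \<Rightarrow> 'k::field)" by simp
lemma fin_sum: "finite S \<Longrightarrow> (\<And>i. i \<in> S \<Longrightarrow> fin (F i)) \<Longrightarrow> fin (\<lambda>r. \<Sum>i\<in>S. F i r)"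
proof (induction S rule: finite_induct)
  case empty thus ?case by simp
next
  case (insert x F) thus ?case by (simp add: fin_add)
qed

lemma valid_walk_lt: "valid_walk m v w \<Longrightarrow> v < m"
  by (cases w) auto

lemma valid_walk_append:
  "valid_walk m v (xs @ ys) = (valid_walk m v xs \<and> valid_walk m (endpt m v xs) ys)"
  by (induction xs arbitrary: v) (auto dest: valid_walk_lt)

lemma valid_cat: "valid_path m u \<Longrightarrow> valid_path m p \<Longrightarrow> endpt m (fst u) (snd u) = fst p \<Longrightarrow> valid_path m (cat u p)"
  by (simp add: valid_path_def cat_def valid_walk_append)

lemma KQ_iff: "f \<in> KQ m \<longleftrightarrow> fin f \<and> (\<forall>p \<in> supp f. valid_path m p)"
  by (auto simp: KQ_def supp_def)

lemma supp_conv2: "r \<in> supp (conv m f g) \<Longrightarrow> \<exists>p\<in>supp f. \<exists>p'\<in>supp g. pmul m p p' = Some r"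
proof -
  assume "r \<in> supp (conv m f g)"
  hence "conv m f g r \<noteq> 0" by (simp add: supp_def)
  then obtain pp where "pp \<in> {(p, p'). f p \<noteq> 0 \<and> g p' \<noteq> 0 \<and> pmul m p p' = Some r}"
    unfolding conv_def by (meson sum.neutral)
  thus ?thesis by (force simp: supp_def)
qed

lemma KQ_conv: "f \<in> KQ m \<Longrightarrow> g \<in> KQ m \<Longrightarrow> conv m f g \<in> KQ m"
  unfolding KQ_iff
  apply (intro conjI fin_conv, simp_all)
  by (metis supp_conv2 pmul_Some valid_cat cat_def)


abbreviation Gen :: "nat \<Rightarrow> (nat \<Rightarrow> 'k::field) \<Rightarrow> path \<Rightarrow> nat \<Rightarrow> path \<Rightarrow> path \<Rightarrow> 'k" where
  "Gen m q p i p' \<equiv> conv m (conv m (pv p) (relE m q i)) (pv p')"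

lemma fin_relE: "fin (relE m q i)"
  by (rule finite_subset[of _ "{(i, [A i, B i]), (i, [B ((i + m - 1) mod m), A ((i + m - 1) mod m)])}"])
     (auto simp: supp_def relE_def)

lemma fin_Gen: "fin (Gen m q p i p')"
  by (intro fin_conv fin_relE fin_pv)

lemma IdE_fin: "x \<in> IdE m q \<Longrightarrow> fin x"
  by (induction rule: IdE.induct) (auto intro!: fin_add fin_smul fin_Gen)

lemma IdE_add: "y \<in> IdE m q \<Longrightarrow> x \<in> IdE m q \<Longrightarrow> (\<lambda>r. x r + y r) \<in> IdE m q"
proof (induction y rule: IdE.induct)
  case zero thus ?case by simp
next
  case (step y p p' i c)
  have "(\<lambda>r. x r + (y r + c * Gen m q p i p' r)) = (\<lambda>r. (x r + y r) + c * Gen m q p i p' r)"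
    by (simp add: algebra_simps)
  moreover have "(\<lambda>r. (x r + y r) + c * Gen m q p i p' r) \<in> IdE m q"
    by (rule IdE.step) (use step in auto)
  ultimately show ?case by simp
qed

lemma IdE_smul: "x \<in> IdE m q \<Longrightarrow> (\<lambda>r. a * x r) \<in> IdE m q"
proof (induction x rule: IdE.induct)
  case zero thus ?case by (simp add: IdE.zero)
next
  case (step y p p' i c)
  have "(\<lambda>r. a * (y r + c * Gen m q p i p' r)) = (\<lambda>r. a * y r + (a * c) * Gen m q p i p' r)"
    by (simp add: algebra_simps)
  moreover have "(\<lambda>r. a * y r + (a * c) * Gen m q p i p' r) \<in> IdE m q"
    by (rule IdE.step) (use step in auto)
  ultimately show ?case by simp
qed

lemma IdE_zero': "(\<lambda>_. 0) \<in> IdE m q" by (rule IdE.zero)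

lemma IdE_diff: "x \<in> IdE m q \<Longrightarrow> y \<in> IdE m q \<Longrightarrow> (\<lambda>r. x r - y r) \<in> IdE m q"
  using IdE_add[OF IdE_smul[of y m q "-1"], of x] by simp

lemma IdE_lin: "x \<in> IdE m q \<Longrightarrow> y \<in> IdE m q \<Longrightarrow> (\<lambda>r. a * x r + b * y r) \<in> IdE m q"
  by (intro IdE_add IdE_smul)

lemma IdE_sum: "finite S \<Longrightarrow> (\<And>i. i \<in> S \<Longrightarrow> F i \<in> IdE m q) \<Longrightarrow> (\<lambda>r. \<Sum>i\<in>S. F i r) \<in> IdE m q"
proof (induction S rule: finite_induct)
  case empty thus ?case by (simp add: IdE.zero)
next
  case (insert x S) thus ?case by (simp add: IdE_add)
qed

lemma IdE_Gen: "valid_path m p \<Longrightarrow> valid_path m p' \<Longrightarrow> i < m \<Longrightarrow> Gen m q p i p' \<in> IdE m q"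
proof -
  assume a: "valid_path m p" "valid_path m p'" "i < m"
  have "(\<lambda>r. (\<lambda>_. 0) r + 1 * Gen m q p i p' r) \<in> IdE m q"
    by (rule IdE.step[OF IdE.zero]) (use a in auto)
  thus ?thesis by simp
qed

lemma conv_pv_Gen:
  "conv m (pv u) (Gen m q p i p') = (if endpt m (fst u) (snd u) = fst p then Gen m q (cat u p) i p' else (\<lambda>_. 0))"
proof -
  have "conv m (pv u) (Gen m q p i p') = conv m (conv m (pv u) (conv m (pv p) (relE m q i))) (pv p')"
    by (rule conv_assoc[symmetric]) (auto intro: fin_conv fin_relE)
  also have "\<dots> = conv m (conv m (conv m (pv u) (pv p)) (relE m q i)) (pv p')"
    by (subst conv_assoc[symmetric]) (auto intro: fin_conv fin_relE)
  finally show ?thesis by (simp add: conv_pv_pv)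
qed

lemma conv_Gen_pv:
  "conv m (Gen m q p i p') (pv u) = (if endpt m (fst p') (snd p') = fst u then Gen m q p i (cat p' u) else (\<lambda>_. 0))"
proof -
  have "conv m (Gen m q p i p') (pv u) = conv m (conv m (pv p) (relE m q i)) (conv m (pv p') (pv u))"
    by (rule conv_assoc) (auto intro: fin_conv fin_relE)
  thus ?thesis by (simp add: conv_pv_pv)
qed


lemma decomp: "fin x \<Longrightarrow> x = (\<lambda>r. \<Sum>u\<in>supp x. x u * pv u r)"
proof
  fix r assume "fin x"
  show "x r = (\<Sum>u\<in>supp x. x u * pv u r)"
  proof (cases "r \<in> supp x")
    case True
    have "(\<Sum>u\<in>supp x. x u * pv u r) = (\<Sum>u\<in>supp x. if u = r then x u else 0)"
      by (intro sum.cong) (auto simp: pv_def)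
    thus ?thesis using True \<open>fin x\<close> by (simp add: sum.delta')
  next
    case False
    hence "x r = 0" by (simp add: supp_def)
    moreover have "(\<Sum>u\<in>supp x. x u * pv u r) = 0"
      by (rule sum.neutral) (use False in \<open>auto simp: pv_def\<close>)
    ultimately show ?thesis by simp
  qed
qed

lemma conv_sum_left:
  fixes g :: "path \<Rightarrow> 'k::field"
  assumes "finite S" "fin g" "\<And>u. u \<in> S \<Longrightarrow> fin (F u)"
  shows "conv m (\<lambda>r. \<Sum>u\<in>S. F u r) g = (\<lambda>r. \<Sum>u\<in>S. conv m (F u) g r)"
  using assms
proof (induction S rule: finite_induct)
  case empty thus ?case by simp
next
  case (insert x S)
  have "conv m (\<lambda>r. \<Sum>u\<in>insert x S. F u r) g = conv m (\<lambda>r. F x r + (\<Sum>u\<in>S. F u r)) g"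
    using insert by simp
  also have "\<dots> = (\<lambda>r. conv m (F x) g r + conv m (\<lambda>r. \<Sum>u\<in>S. F u r) g r)"
    by (rule conv_add_left) (use insert in \<open>auto intro: fin_sum\<close>)
  finally show ?case using insert by simp
qed

lemma conv_sum_right:
  fixes g :: "path \<Rightarrow> 'k::field"
  assumes "finite S" "fin g" "\<And>u. u \<in> S \<Longrightarrow> fin (F u)"
  shows "conv m g (\<lambda>r. \<Sum>u\<in>S. F u r) = (\<lambda>r. \<Sum>u\<in>S. conv m g (F u) r)"
  using assms
proof (induction S rule: finite_induct)
  case empty thus ?case by simp
next
  case (insert x S)
  have "conv m g (\<lambda>r. \<Sum>u\<in>insert x S. F u r) = conv m g (\<lambda>r. F x r + (\<Sum>u\<in>S. F u r))"
    using insert by simp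
  also have "\<dots> = (\<lambda>r. conv m g (F x) r + conv m g (\<lambda>r. \<Sum>u\<in>S. F u r) r)"
    by (rule conv_add_right) (use insert in \<open>auto intro: fin_sum\<close>)
  finally show ?case using insert by simp
qed

lemma conv_KQ_Gen:
  assumes x: "x \<in> KQ m" and v: "valid_path m p" "valid_path m p'" "i < m"
  shows "conv m x (Gen m q p i p') \<in> IdE m q"
proof -
  have fx: "fin x" using x by (simp add: KQ_iff)
  have "conv m x (Gen m q p i p') = conv m (\<lambda>r. \<Sum>u\<in>supp x. x u * pv u r) (Gen m q p i p')"
    using decomp[OF fx] by simp
  also have "\<dots> = (\<lambda>r. \<Sum>u\<in>supp x. conv m (\<lambda>r. x u * pv u r) (Gen m q p i p') r)"
    by (rule conv_sum_left) (auto simp: fx fin_Gen intro: fin_smul)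
  also have "\<dots> = (\<lambda>r. \<Sum>u\<in>supp x. x u * conv m (pv u) (Gen m q p i p') r)"
    by (simp add: conv_smul_left fin_Gen)
  finally have e: "conv m x (Gen m q p i p') = (\<lambda>r. \<Sum>u\<in>supp x. x u * conv m (pv u) (Gen m q p i p') r)" .
  show ?thesis unfolding e
  proof (rule IdE_sum[OF fx])
    fix u assume u: "u \<in> supp x"
    hence vu: "valid_path m u" using x by (simp add: KQ_iff)
    show "(\<lambda>r. x u * conv m (pv u) (Gen m q p i p') r) \<in> IdE m q"
      apply (rule IdE_smul)
      using vu v by (auto simp: conv_pv_Gen IdE.zero intro!: IdE_Gen valid_cat)
  qed
qed

lemma conv_Gen_KQ:
  assumes x: "x \<in> KQ m" and v: "valid_path m p" "valid_path m p'" "i < m"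
  shows "conv m (Gen m q p i p') x \<in> IdE m q"
proof -
  have fx: "fin x" using x by (simp add: KQ_iff)
  have "conv m (Gen m q p i p') x = conv m (Gen m q p i p') (\<lambda>r. \<Sum>u\<in>supp x. x u * pv u r)"
    using decomp[OF fx] by simp
  also have "\<dots> = (\<lambda>r. \<Sum>u\<in>supp x. conv m (Gen m q p i p') (\<lambda>r. x u * pv u r) r)"
    by (rule conv_sum_right) (auto simp: fx fin_Gen intro: fin_smul)
  also have "\<dots> = (\<lambda>r. \<Sum>u\<in>supp x. x u * conv m (Gen m q p i p') (pv u) r)"
    by (simp add: conv_smul_right fin_Gen)
  finally have e: "conv m (Gen m q p i p') x = (\<lambda>r. \<Sum>u\<in>supp x. x u * conv m (Gen m q p i p') (pv u) r)" .
  show ?thesis unfolding e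
  proof (rule IdE_sum[OF fx])
    fix u assume u: "u \<in> supp x"
    hence vu: "valid_path m u" using x by (simp add: KQ_iff)
    show "(\<lambda>r. x u * conv m (Gen m q p i p') (pv u) r) \<in> IdE m q"
      apply (rule IdE_smul)
      using vu v by (auto simp: conv_Gen_pv IdE.zero intro!: IdE_Gen valid_cat)
  qed
qed

lemma IdE_mult_left: "w \<in> IdE m q \<Longrightarrow> x \<in> KQ m \<Longrightarrow> conv m x w \<in> IdE m q"
proof (induction w rule: IdE.induct)
  case zero thus ?case by (simp add: IdE.zero)
next
  case (step y p p' i c)
  have fx: "fin x" using step by (simp add: KQ_iff)
  have "conv m x (\<lambda>r. y r + c * Gen m q p i p' r) = (\<lambda>r. conv m x y r + c * conv m x (Gen m q p i p') r)"
    using conv_lin_right[OF IdE_fin[OF step(1)] fin_Gen fx, where a=1 and b=c and m=m] by simp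
  moreover have "conv m x (Gen m q p i p') \<in> IdE m q" by (rule conv_KQ_Gen) (use step in auto)
  ultimately show ?case using IdE_add[OF IdE_smul[of _ m q c] step.IH[OF step.prems]] by simp
qed

lemma IdE_mult_right: "w \<in> IdE m q \<Longrightarrow> x \<in> KQ m \<Longrightarrow> conv m w x \<in> IdE m q"
proof (induction w rule: IdE.induct)
  case zero thus ?case by (simp add: IdE.zero)
next
  case (step y p p' i c)
  have fx: "fin x" using step by (simp add: KQ_iff)
  have "conv m (\<lambda>r. y r + c * Gen m q p i p' r) x = (\<lambda>r. conv m y x r + c * conv m (Gen m q p i p') x r)"
    using conv_lin_left[OF IdE_fin[OF step(1)] fin_Gen fx, where a=1 and b=c and m=m] by simp
  moreover have "conv m (Gen m q p i p') x \<in> IdE m q" by (rule conv_Gen_KQ) (use step in auto)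
  ultimately show ?case using IdE_add[OF IdE_smul[of _ m q c] step.IH[OF step.prems]] by simp
qed


definition th :: "(path \<Rightarrow> 'k::field) \<Rightarrow> path \<Rightarrow> 'k" where
  "th f = (\<lambda>p. (-1) ^ plen p * f p)"

lemma supp_th[simp]: "supp (th f) = supp f"
  by (auto simp: supp_def th_def)

lemma KQ_th: "x \<in> KQ m \<Longrightarrow> th x \<in> KQ m"
  by (simp add: KQ_iff)

lemma th_conv: "conv m (th f) (th g) = th (conv m f g)"
proof
  fix r
  have S: "{(p, p'). th f p \<noteq> 0 \<and> th g p' \<noteq> 0 \<and> pmul m p p' = Some r} = {(p, p'). f p \<noteq> 0 \<and> g p' \<noteq> 0 \<and> pmul m p p' = Some r}"
    by (auto simp: th_def)
  show "conv m (th f) (th g) r = th (conv m f g) r"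
    unfolding conv_def th_def S
    apply (subst sum_distrib_left)
    apply (intro sum.cong refl)
    by (auto simp: pmul_Some plen_def power_add)
qed

lemma th_lin: "th (\<lambda>r. a * f r + b * g r) = (\<lambda>r. a * th f r + b * th g r)"
  by (auto simp: th_def algebra_simps)

lemma th_pv: "th (pv p) = (\<lambda>r. (-1) ^ plen p * pv p r)"
  by (auto simp: th_def pv_def)

lemma th_relE: "th (relE m q i) = relE m q i"
  by (auto simp: th_def relE_def plen_def)

lemma th_Gen: "th (Gen m q p i p') = (\<lambda>r. (-1) ^ (plen p + plen p') * Gen m q p i p' r)"
proof -
  have "th (Gen m q p i p') = conv m (th (conv m (pv p) (relE m q i))) (th (pv p'))"
    by (simp add: th_conv)
  also have "\<dots> = conv m (conv m (th (pv p)) (relE m q i)) (th (pv p'))"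
    by (metis th_conv th_relE)
  also have "\<dots> = conv m (conv m (\<lambda>r. (-1) ^ plen p * pv p r) (relE m q i)) (\<lambda>r. (-1) ^ plen p' * pv p' r)"
    by (simp add: th_pv)
  also have "\<dots> = (\<lambda>r. (-1) ^ (plen p + plen p') * Gen m q p i p' r)"
    by (simp add: conv_smul_left conv_smul_right fin_relE fin_conv fin_smul power_add mult.assoc)
  finally show ?thesis .
qed

lemma IdE_th: "x \<in> IdE m q \<Longrightarrow> th x \<in> IdE m q"
proof (induction x rule: IdE.induct)
  case zero thus ?case by (simp add: th_def IdE.zero)
next
  case (step y p p' i c)
  have "th (\<lambda>r. y r + c * Gen m q p i p' r) = (\<lambda>r. th y r + (c * (-1) ^ (plen p + plen p')) * Gen m q p i p' r)"
    using th_lin[of 1 y c "Gen m q p i p'"] by (simp add: th_Gen algebra_simps)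
  moreover have "(\<lambda>r. th y r + (c * (-1) ^ (plen p + plen p')) * Gen m q p i p' r) \<in> IdE m q"
    by (rule IdE.step) (use step in auto)
  ultimately show ?case by simp
qed

definition one :: "nat \<Rightarrow> path \<Rightarrow> 'k::field" where
  "one m = (\<lambda>r. \<Sum>i<m. pv (i, []) r)"

lemma fin_one: "fin (one m)"
  unfolding one_def by (rule fin_sum) auto

lemma one_supp: "(one m p :: 'k::field) \<noteq> 0 \<Longrightarrow> snd p = [] \<and> fst p < m"
proof (rule ccontr)
  assume a: "(one m p :: 'k) \<noteq> 0" "\<not> (snd p = [] \<and> fst p < m)"
  have "(one m p :: 'k) = (\<Sum>i<m. pv (i, []) p)" by (simp add: one_def)
  also have "\<dots> = 0" by (rule sum.neutral) (use a(2) in \<open>auto simp: pv_def\<close>)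
  finally show False using a(1) by simp
qed

lemma th_one: "th (one m :: path \<Rightarrow> 'k::field) = one m"
proof
  fix p
  show "th (one m :: path \<Rightarrow> 'k) p = one m p"
  proof (cases "(one m p :: 'k) = 0")
    case True thus ?thesis by (simp add: th_def)
  next
    case False hence "snd p = []" using one_supp by blast
    thus ?thesis by (simp add: th_def plen_def)
  qed
qed

lemma endpt_lt: "valid_walk m v w \<Longrightarrow> endpt m v w < m"
  by (induction m v w rule: valid_walk.induct) auto

lemma conv_one_left: "valid_path m a \<Longrightarrow> conv m (one m) (pv a) = (pv a :: path \<Rightarrow> 'k::field)"
proof -
  assume v: "valid_path m a"
  hence "fst a < m" by (simp add: valid_path_def valid_walk_lt)
  have "conv m (one m) (pv a) = (\<lambda>r. \<Sum>i<m. conv m (pv (i, [])) (pv a :: path \<Rightarrow> 'k) r)"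
    unfolding one_def by (rule conv_sum_left) auto
  also have "\<dots> = (\<lambda>r. \<Sum>i<m. if i = fst a then pv a r else 0)"
  proof (intro ext sum.cong refl)
    fix r i show "conv m (pv (i, [])) (pv a :: path \<Rightarrow> 'k) r = (if i = fst a then pv a r else 0)"
      by (cases a) (simp add: conv_pv_pv cat_def)
  qed
  also have "\<dots> = pv a" using \<open>fst a < m\<close> by (simp add: sum.delta')
  finally show ?thesis .
qed

lemma conv_one_right: "valid_path m a \<Longrightarrow> conv m (pv a) (one m) = (pv a :: path \<Rightarrow> 'k::field)"
proof -
  assume v: "valid_path m a"
  hence e: "endpt m (fst a) (snd a) < m" by (simp add: valid_path_def endpt_lt)
  have "conv m (pv a) (one m) = (\<lambda>r. \<Sum>i<m. conv m (pv a :: path \<Rightarrow> 'k) (pv (i, [])) r)"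
    unfolding one_def by (rule conv_sum_right) auto
  also have "\<dots> = (\<lambda>r. \<Sum>i<m. if endpt m (fst a) (snd a) = i then pv a r else 0)"
  proof (intro ext sum.cong refl)
    fix r i show "conv m (pv a :: path \<Rightarrow> 'k) (pv (i, [])) r = (if endpt m (fst a) (snd a) = i then pv a r else 0)"
      by (cases a) (simp add: conv_pv_pv cat_def)
  qed
  also have "\<dots> = pv a" using e by (simp add: sum.delta)
  finally show ?thesis .
qed

lemma KQ_pv: "valid_path m a \<Longrightarrow> pv a \<in> KQ m"
  by (simp add: KQ_iff)

lemma KQ_one: "one m \<in> KQ m"
  unfolding KQ_iff using fin_one one_supp
  by (fastforce simp: supp_def valid_path_def)

definition Inv :: "nat \<Rightarrow> (nat \<Rightarrow> 'k::field) \<Rightarrow> (path \<Rightarrow> 'k) \<Rightarrow> bool" where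
  "Inv m q x \<longleftrightarrow> x \<in> KQ m \<and> (\<forall>a. valid_path m a \<and> plen a = 1 \<longrightarrow>
      (\<lambda>r. conv m x (pv a) r - conv m (pv a) (th x) r) \<in> IdE m q)"

lemma KQ_fin: "x \<in> KQ m \<Longrightarrow> fin x" by (simp add: KQ_iff)

lemma KQ_add: "x \<in> KQ m \<Longrightarrow> y \<in> KQ m \<Longrightarrow> (\<lambda>r. x r + y r) \<in> KQ m"
proof -
  assume a: "x \<in> KQ m" "y \<in> KQ m"
  have "fin (\<lambda>r. x r + y r)" by (rule fin_add) (use a in \<open>auto simp: KQ_iff\<close>)
  moreover have "\<forall>p\<in>supp (\<lambda>r. x r + y r). valid_path m p"
    using a by (auto simp: KQ_iff supp_def) (metis add.left_neutral)
  ultimately show ?thesis by (simp add: KQ_iff)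
qed
lemma KQ_smul: "x \<in> KQ m \<Longrightarrow> (\<lambda>r. c * x r) \<in> KQ m"
proof -
  assume a: "x \<in> KQ m"
  have "fin (\<lambda>r. c * x r)" by (rule fin_smul) (use a in \<open>auto simp: KQ_iff\<close>)
  moreover have "\<forall>p\<in>supp (\<lambda>r. c * x r). valid_path m p"
    using a by (auto simp: KQ_iff supp_def)
  ultimately show ?thesis by (simp add: KQ_iff)
qed

lemma Zgr_Inv: "x \<in> Zgr m q \<Longrightarrow> Inv m q x"
proof (induction x rule: Zgr.induct)
  case (gen x n)
  show ?case unfolding Inv_def
  proof (intro conjI allI impI)
    show "x \<in> KQ m" by fact
    fix a assume a: "valid_path m a \<and> plen a = 1"
    have pa: "pv a \<in> KQ m" using a by (simp add: KQ_pv)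
    have fx: "fin x" using gen by (simp add: KQ_fin)
    have H: "(\<lambda>r. conv m x (pv a) r - (-1) ^ (n * 1) * conv m (pv a) x r) \<in> IdE m q"
      by (rule gen.hyps(3)[OF pa]) (use a in \<open>auto simp: pv_def\<close>)
    obtain y where y: "y \<in> KQ m" "(\<lambda>r. x r - y r) \<in> IdE m q" "\<forall>p. y p \<noteq> 0 \<longrightarrow> plen p = n"
      using gen.hyps(2) unfolding len_hom_def by blast
    have thy: "th y = (\<lambda>r. (-1) ^ n * y r)"
    proof
      fix p show "th y p = (-1) ^ n * y p"
        using y(3) by (cases "y p = 0"; cases p) (auto simp: th_def)
    qed
    have D: "(\<lambda>r. th x r - (-1) ^ n * x r) \<in> IdE m q"
    proof -
      have "(\<lambda>r. 1 * th (\<lambda>r. x r - y r) r + (- ((-1) ^ n)) * (x r - y r)) \<in> IdE m q"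
        by (intro IdE_lin IdE_th y(2))
      moreover have "(\<lambda>r. 1 * th (\<lambda>r. x r - y r) r + (- ((-1) ^ n)) * (x r - y r)) = (\<lambda>r. th x r - (-1) ^ n * x r)"
        using thy th_lin[of 1 x "-1" y] by (auto simp: fun_eq_iff algebra_simps)
      ultimately show ?thesis by simp
    qed
    have D2: "conv m (pv a) (\<lambda>r. th x r - (-1) ^ n * x r) \<in> IdE m q"
      by (rule IdE_mult_left[OF D pa])
    have e: "conv m (pv a) (\<lambda>r. th x r - (-1) ^ n * x r) = (\<lambda>r. 1 * conv m (pv a) (th x) r + (- ((-1) ^ n)) * conv m (pv a) x r)"
      using conv_lin_right[of "th x" x "pv a" m 1 "- ((-1) ^ n)"] fx by simp
    have "(\<lambda>r. (conv m x (pv a) r - (-1) ^ (n * 1) * conv m (pv a) x r) - (1 * conv m (pv a) (th x) r + (- ((-1) ^ n)) * conv m (pv a) x r)) \<in> IdE m q"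
      using IdE_diff[OF H D2[unfolded e]] by simp
    thus "(\<lambda>r. conv m x (pv a) r - conv m (pv a) (th x) r) \<in> IdE m q"
      by (simp add: algebra_simps)
  qed
next
  case one
  have "Inv m q (one m)" unfolding Inv_def
    by (auto simp: KQ_one th_one conv_one_left conv_one_right IdE.zero)
  thus ?case by (simp add: one_def)
next
  case (add x y)
  show ?case unfolding Inv_def
  proof (intro conjI allI impI)
    have kx: "x \<in> KQ m" and ky: "y \<in> KQ m" using add by (auto simp: Inv_def)
    show "(\<lambda>r. x r + y r) \<in> KQ m" using kx ky by (rule KQ_add)
    fix a assume a: "valid_path m a \<and> plen a = 1"
    have Ix: "(\<lambda>r. conv m x (pv a) r - conv m (pv a) (th x) r) \<in> IdE m q"
      and Iy: "(\<lambda>r. conv m y (pv a) r - conv m (pv a) (th y) r) \<in> IdE m q"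
      using add a unfolding Inv_def by blast+
    have t: "th (\<lambda>r. x r + y r) = (\<lambda>r. th x r + th y r)" by (auto simp: th_def algebra_simps)
    show "(\<lambda>r. conv m (\<lambda>r. x r + y r) (pv a) r - conv m (pv a) (th (\<lambda>r. x r + y r)) r) \<in> IdE m q"
      using IdE_add[OF Iy Ix] kx ky
      by (simp add: t conv_add_left conv_add_right KQ_fin algebra_simps)
  qed
next
  case (mul x y)
  show ?case unfolding Inv_def
  proof (intro conjI allI impI)
    have kx: "x \<in> KQ m" and ky: "y \<in> KQ m" using mul by (auto simp: Inv_def)
    have fx: "fin x" and fy: "fin y" using kx ky by (auto simp: KQ_fin)
    show "conv m x y \<in> KQ m" using kx ky by (rule KQ_conv)
    fix a assume a: "valid_path m a \<and> plen a = 1"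
    have pa: "pv a \<in> KQ m" using a by (simp add: KQ_pv)
    define Dx where "Dx = (\<lambda>r. conv m x (pv a) r - conv m (pv a) (th x) r)"
    define Dy where "Dy = (\<lambda>r. conv m y (pv a) r - conv m (pv a) (th y) r)"
    have Ix: "Dx \<in> IdE m q" and Iy: "Dy \<in> IdE m q"
      using mul a unfolding Inv_def Dx_def Dy_def by blast+
    have I1: "conv m x Dy \<in> IdE m q" by (rule IdE_mult_left[OF Iy kx])
    have I2: "conv m Dx (th y) \<in> IdE m q" by (rule IdE_mult_right[OF Ix KQ_th[OF ky]])
    have e1: "conv m x Dy = (\<lambda>r. conv m x (conv m y (pv a)) r - conv m x (conv m (pv a) (th y)) r)"
      unfolding Dy_def by (rule conv_diff_right) (auto simp: fx fy intro: fin_conv)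
    have e2: "conv m Dx (th y) = (\<lambda>r. conv m (conv m x (pv a)) (th y) r - conv m (conv m (pv a) (th x)) (th y) r)"
      unfolding Dx_def by (rule conv_diff_left) (auto simp: fx fy intro: fin_conv)
    have a1: "conv m x (conv m y (pv a)) = conv m (conv m x y) (pv a)"
      by (rule conv_assoc[symmetric]) (auto simp: fx fy)
    have a2: "conv m x (conv m (pv a) (th y)) = conv m (conv m x (pv a)) (th y)"
      by (rule conv_assoc[symmetric]) (auto simp: fx fy)
    have a3: "conv m (conv m (pv a) (th x)) (th y) = conv m (pv a) (th (conv m x y))"
      by (subst conv_assoc) (auto simp: fx fy th_conv)
    have "(\<lambda>r. conv m x Dy r + conv m Dx (th y) r) \<in> IdE m q"
      by (rule IdE_add[OF I2 I1])
    thus "(\<lambda>r. conv m (conv m x y) (pv a) r - conv m (pv a) (th (conv m x y)) r) \<in> IdE m q"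
      unfolding e1 e2 a1 a2 a3 by simp
  qed
next
  case (smul x c)
  show ?case unfolding Inv_def
  proof (intro conjI allI impI)
    have kx: "x \<in> KQ m" using smul by (auto simp: Inv_def)
    show "(\<lambda>r. c * x r) \<in> KQ m" using kx by (rule KQ_smul)
    fix a assume a: "valid_path m a \<and> plen a = 1"
    have Ix: "(\<lambda>r. conv m x (pv a) r - conv m (pv a) (th x) r) \<in> IdE m q"
      using smul a unfolding Inv_def by blast
    have t: "th (\<lambda>r. c * x r) = (\<lambda>r. c * th x r)" by (auto simp: th_def algebra_simps)
    show "(\<lambda>r. conv m (\<lambda>r. c * x r) (pv a) r - conv m (pv a) (th (\<lambda>r. c * x r)) r) \<in> IdE m q"
      using IdE_smul[OF Ix, of c] kx
      by (simp add: t conv_smul_left conv_smul_right KQ_fin algebra_simps)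
  qed
next
  case (cong x y)
  show ?case unfolding Inv_def
  proof (intro conjI allI impI)
    have kx: "x \<in> KQ m" using cong by (auto simp: Inv_def)
    have ky: "y \<in> KQ m" by fact
    show "y \<in> KQ m" by fact
    fix a assume a: "valid_path m a \<and> plen a = 1"
    have pa: "pv a \<in> KQ m" using a by (simp add: KQ_pv)
    have Ix: "(\<lambda>r. conv m x (pv a) r - conv m (pv a) (th x) r) \<in> IdE m q"
      using cong a unfolding Inv_def by blast
    have D: "(\<lambda>r. x r - y r) \<in> IdE m q" by fact
    have I1: "conv m (\<lambda>r. x r - y r) (pv a) \<in> IdE m q" by (rule IdE_mult_right[OF D pa])
    have I2: "conv m (pv a) (th (\<lambda>r. x r - y r)) \<in> IdE m q" by (rule IdE_mult_left[OF IdE_th[OF D] pa])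
    have t: "th (\<lambda>r. x r - y r) = (\<lambda>r. th x r - th y r)" by (auto simp: th_def algebra_simps)
    have "(\<lambda>r. (conv m x (pv a) r - conv m (pv a) (th x) r) - conv m (\<lambda>r. x r - y r) (pv a) r + conv m (pv a) (th (\<lambda>r. x r - y r)) r) \<in> IdE m q"
      using IdE_add[OF I2 IdE_diff[OF Ix I1]] by simp
    thus "(\<lambda>r. conv m y (pv a) r - conv m (pv a) (th y) r) \<in> IdE m q"
      using kx ky by (simp add: t conv_diff_left conv_diff_right KQ_fin algebra_simps)
  qed
qed


definition isA :: "arr \<Rightarrow> bool" where "isA x = (case x of A _ \<Rightarrow> True | B _ \<Rightarrow> False)"
abbreviation pat :: "arr list \<Rightarrow> bool list" where "pat w \<equiv> map isA w"
abbreviation cT :: "bool list \<Rightarrow> nat" where "cT bs \<equiv> length (filter (\<lambda>x. x) bs)"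
abbreviation cF :: "bool list \<Rightarrow> nat" where "cF bs \<equiv> length (filter Not bs)"

definition vert :: "nat \<Rightarrow> nat \<Rightarrow> nat \<Rightarrow> nat \<Rightarrow> nat" where
  "vert m v a b = (v + a + b * (m - 1)) mod m"

abbreviation pr :: "nat \<Rightarrow> nat \<Rightarrow> nat" where "pr m v \<equiv> (v + m - Suc 0) mod m"

fun mk :: "nat \<Rightarrow> nat \<Rightarrow> bool list \<Rightarrow> arr list" where
  "mk m v [] = []"
| "mk m v (True # bs) = A v # mk m (Suc v mod m) bs"
| "mk m v (False # bs) = B (pr m v) # mk m (pr m v) bs"

lemma pr_lt: "v < m \<Longrightarrow> pr m v < m" by simp

lemma Suc_pr: "v < m \<Longrightarrow> Suc (pr m v) mod m = v"
proof -
  assume v: "v < m"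
  show ?thesis
  proof (cases "v = 0")
    case True
    hence "pr m v = m - 1" using v by simp
    thus ?thesis using v True by simp
  next
    case False
    hence e: "v + m - Suc 0 = (v - 1) + m" using v by linarith
    have "((v - 1) + m) mod m = v - 1" using v by simp
    hence "pr m v = v - 1" using e by simp
    thus ?thesis using v False by simp
  qed
qed

lemma pr_Suc: "v < m \<Longrightarrow> pr m (Suc v mod m) = v"
proof -
  assume v: "v < m"
  show ?thesis
  proof (cases "Suc v = m")
    case True
    hence "Suc v mod m = 0" by simp
    thus ?thesis using True by simp
  next
    case False
    hence "Suc v < m" using v by simp
    hence "Suc v mod m = Suc v" by simp
    moreover have "Suc v + m - Suc 0 = v + m" by simp
    ultimately show ?thesis using v by simp
  qed
qed

lemma valid_mk: "valid_walk m v w \<Longrightarrow> w = mk m v (pat w)"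
proof (induction w arbitrary: v)
  case Nil thus ?case by simp
next
  case (Cons x w)
  show ?case
  proof (cases x)
    case (A j) thus ?thesis using Cons by (auto simp: isA_def)
  next
    case (B j)
    hence j: "j < m" "Suc j mod m = v" using Cons by auto
    hence "pr m v = j" using pr_Suc by blast
    thus ?thesis using Cons B by (auto simp: isA_def)
  qed
qed

lemma pat_mk[simp]: "pat (mk m v bs) = bs"
  by (induction m v bs rule: mk.induct) (auto simp: isA_def)

lemma valid_walk_mk: "v < m \<Longrightarrow> valid_walk m v (mk m v bs)"
  by (induction m v bs rule: mk.induct) (auto simp: Suc_pr)

lemma mk_append: "mk m v (xs @ ys) = mk m v xs @ mk m (endpt m v (mk m v xs)) ys"
  by (induction m v xs rule: mk.induct) auto

lemma vert_Suc: "m > 0 \<Longrightarrow> vert m (Suc v mod m) a b = vert m v (Suc a) b"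
proof -
  have "(Suc v mod m + (a + b * (m - 1))) mod m = (Suc v + (a + b * (m - 1))) mod m" by (rule mod_add_left_eq)
  thus ?thesis unfolding vert_def by (simp add: add.assoc)
qed

lemma vert_pr: "m > 0 \<Longrightarrow> vert m (pr m v) a b = vert m v a (Suc b)"
proof -
  assume m: "m > 0"
  have "((v + m - Suc 0) mod m + (a + b * (m - 1))) mod m = ((v + m - Suc 0) + (a + b * (m - 1))) mod m" by (rule mod_add_left_eq)
  hence "vert m (pr m v) a b = ((v + m - Suc 0) + a + b * (m - 1)) mod m"
    unfolding vert_def by (simp add: add.assoc)
  also have "(v + m - Suc 0) + a + b * (m - 1) = v + a + Suc b * (m - 1)" using m by simp
  finally show ?thesis by (simp add: vert_def)
qed

lemma endpt_mk: "v < m \<Longrightarrow> endpt m v (mk m v bs) = vert m v (cT bs) (cF bs)"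
proof (induction m v bs rule: mk.induct)
  case (1 m v) thus ?case by (simp add: vert_def)
next
  case (2 m v bs) thus ?case by (simp add: vert_Suc)
next
  case (3 m v bs) thus ?case by (simp add: vert_pr)
qed

fun kap :: "nat \<Rightarrow> (nat \<Rightarrow> 'k::field) \<Rightarrow> nat \<Rightarrow> nat \<Rightarrow> nat \<Rightarrow> bool list \<Rightarrow> 'k" where
  "kap m q v na nb [] = 1"
| "kap m q v na nb (True # xs) = (\<Prod>b<nb. inverse (- q (vert m v na b))) * kap m q v (Suc na) nb xs"
| "kap m q v na nb (False # xs) = kap m q v na (Suc nb) xs"

lemma kap_swap: "kap m q v na nb (xs @ False # True # ys) =
   inverse (- q (vert m v (na + cT xs) (nb + cF xs))) * kap m q v na nb (xs @ True # False # ys)"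
proof (induction xs arbitrary: na nb)
  case Nil thus ?case by (simp add: mult.assoc)
next
  case (Cons x xs)
  show ?case by (cases x) (simp_all add: Cons mult.left_commute)
qed

lemma kap_F: "kap m q v na nb (replicate b False) = 1"
  by (induction b arbitrary: nb) auto

lemma kap_sorted: "kap m q v na 0 (replicate a True @ replicate b False) = 1"
  by (induction a arbitrary: na) (auto simp: kap_F)

fun invc :: "bool list \<Rightarrow> nat" where
  "invc [] = 0"
| "invc (True # xs) = invc xs"
| "invc (False # xs) = cT xs + invc xs"

lemma invc_swap: "invc (xs @ False # True # ys) = Suc (invc (xs @ True # False # ys))"
proof (induction xs)
  case Nil thus ?case by simp
next
  case (Cons x xs) thus ?case by (cases x) auto
qed

lemma no_FT_sorted0: "(\<forall>xs ys. bs \<noteq> xs @ False # True # ys) \<Longrightarrow> \<exists>a b. bs = replicate a True @ replicate b False"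
proof (induction bs)
  case Nil thus ?case by (metis append_Nil replicate_0)
next
  case (Cons x bs)
  have h: "\<forall>xs ys. bs \<noteq> xs @ False # True # ys"
  proof (intro allI notI)
    fix xs ys assume "bs = xs @ False # True # ys"
    hence "x # bs = (x # xs) @ False # True # ys" by simp
    thus False using Cons.prems by blast
  qed
  obtain a b where ab: "bs = replicate a True @ replicate b False" using Cons.IH[OF h] by blast
  show ?case
  proof (cases x)
    case True
    hence "x # bs = replicate (Suc a) True @ replicate b False" using ab by simp
    thus ?thesis by blast
  next
    case False
    have "a = 0"
    proof (rule ccontr)
      assume "a \<noteq> 0"
      then obtain k where "a = Suc k" by (cases a) auto
      hence "x # bs = [] @ False # True # (replicate k True @ replicate b False)"
        using False ab by simp
      thus False using Cons.prems by blast
    qed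
    hence "x # bs = replicate 0 True @ replicate (Suc b) False" using ab False by simp
    thus ?thesis by blast
  qed
qed

lemma no_FT_sorted: "(\<forall>xs ys. bs \<noteq> xs @ False # True # ys) \<Longrightarrow> bs = replicate (cT bs) True @ replicate (cF bs) False"
proof -
  assume "\<forall>xs ys. bs \<noteq> xs @ False # True # ys"
  then obtain a b where ab: "bs = replicate a True @ replicate b False" using no_FT_sorted0 by blast
  have "cT (replicate a True @ replicate b False) = a" "cF (replicate a True @ replicate b False) = b"
    by (simp_all add: filter_replicate)
  thus ?thesis using ab by simp
qed


lemma relE_lin: "relE m q i = (\<lambda>r. inverse (q i) * pv (i, [A i, B i]) r + 1 * pv (i, [B (pr m i), A (pr m i)]) r)"
  by (auto simp: relE_def pv_def fun_eq_iff)

lemma endpt_P1: "i < m \<Longrightarrow> endpt m i [A i, B i] = i" by simp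
lemma endpt_P2: "i < m \<Longrightarrow> endpt m i [B (pr m i), A (pr m i)] = i" by (simp add: Suc_pr)

lemma Gen_expl:
  assumes i: "i < m"
  shows "Gen m q p i p' = (if endpt m (fst p) (snd p) = i \<and> fst p' = i then
     (\<lambda>r. inverse (q i) * pv (fst p, snd p @ [A i, B i] @ snd p') r + 1 * pv (fst p, snd p @ [B (pr m i), A (pr m i)] @ snd p') r)
     else (\<lambda>_. 0))"
proof -
  let ?P1 = "(i, [A i, B i])" and ?P2 = "(i, [B (pr m i), A (pr m i)])"
  have c1: "conv m (pv p) (relE m q i) = (\<lambda>r. inverse (q i) * conv m (pv p) (pv ?P1) r + 1 * conv m (pv p) (pv ?P2) r)"
    unfolding relE_lin by (rule conv_lin_right) auto
  show ?thesis
  proof (cases "endpt m (fst p) (snd p) = i")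
    case False
    thus ?thesis unfolding c1 by (simp add: conv_pv_pv)
  next
    case True
    have c2: "conv m (pv p) (relE m q i) = (\<lambda>r. inverse (q i) * pv (cat p ?P1) r + 1 * pv (cat p ?P2) r)"
      unfolding c1 using True by (simp add: conv_pv_pv)
    have "Gen m q p i p' = (\<lambda>r. inverse (q i) * conv m (pv (cat p ?P1)) (pv p') r + 1 * conv m (pv (cat p ?P2)) (pv p') r)"
      unfolding c2 by (rule conv_lin_left) auto
    moreover have "endpt m (fst (cat p ?P1)) (snd (cat p ?P1)) = i" "endpt m (fst (cat p ?P2)) (snd (cat p ?P2)) = i"
      using True i by (simp_all add: cat_def endpt_append Suc_pr)
    ultimately show ?thesis using True by (auto simp: conv_pv_pv cat_def fun_eq_iff)
  qed
qed

definition Phi :: "nat \<Rightarrow> (nat \<Rightarrow> 'k::field) \<Rightarrow> nat \<Rightarrow> nat \<Rightarrow> nat \<Rightarrow> (path \<Rightarrow> 'k) \<Rightarrow> 'k" where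
  "Phi m q v s t x = (\<Sum>p\<in>supp x. if fst p = v \<and> cT (pat (snd p)) = s \<and> cF (pat (snd p)) = t
                                   then x p * kap m q v 0 0 (pat (snd p)) else 0)"

lemma Phi_super: "finite S \<Longrightarrow> supp x \<subseteq> S \<Longrightarrow> Phi m q v s t x = (\<Sum>p\<in>S. if fst p = v \<and> cT (pat (snd p)) = s \<and> cF (pat (snd p)) = t
                                   then x p * kap m q v 0 0 (pat (snd p)) else 0)"
  unfolding Phi_def by (rule sum.mono_neutral_left) (auto simp: supp_def)

lemma Phi_lin: "fin x \<Longrightarrow> fin y \<Longrightarrow> Phi m q v s t (\<lambda>r. a * x r + b * y r) = a * Phi m q v s t x + b * Phi m q v s t y"
  apply (subst Phi_super[of "supp x \<union> supp y"], simp, force simp: supp_def)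
  apply (subst Phi_super[of "supp x \<union> supp y" x], simp, force)
  apply (subst Phi_super[of "supp x \<union> supp y" y], simp, force)
  by (simp add: sum_distrib_left sum.distrib[symmetric] algebra_simps if_distrib cong: if_cong)

lemma Phi_zero[simp]: "Phi m q v s t (\<lambda>_. 0) = 0"
  by (simp add: Phi_def supp_def)

lemma Phi_pv: "Phi m q v s t (pv P) = (if fst P = v \<and> cT (pat (snd P)) = s \<and> cF (pat (snd P)) = t
                                   then kap m q v 0 0 (pat (snd P)) else 0)"
  apply (subst Phi_super[of "{P}"])
  apply simp apply simp
  by (auto simp: pv_def)

lemma Phi_Gen:
  assumes vp: "valid_path m p" and i: "i < m"
  shows "Phi m q v s t (Gen m q p i p') = 0"
proof (cases "endpt m (fst p) (snd p) = i \<and> fst p' = i")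
  case False thus ?thesis by (subst Gen_expl[OF i]) (simp only: if_not_P[OF False] if_False Phi_zero)
next
  case True
  have w: "snd p = mk m (fst p) (pat (snd p))" using vp by (simp add: valid_path_def valid_mk)
  have fp: "fst p < m" using vp by (simp add: valid_path_def valid_walk_lt)
  have ve: "vert m (fst p) (cT (pat (snd p))) (cF (pat (snd p))) = i"
    using True endpt_mk[OF fp, of "pat (snd p)"] w by simp
  let ?xs = "pat (snd p)" and ?ys = "pat (snd p')"
  have sw: "kap m q (fst p) 0 0 (?xs @ False # True # ?ys) = inverse (- q i) * kap m q (fst p) 0 0 (?xs @ True # False # ?ys)"
    using kap_swap[of m q "fst p" 0 0 ?xs ?ys] ve by simp
  let ?P1 = "(fst p, snd p @ [A i, B i] @ snd p')" and ?P2 = "(fst p, snd p @ [B (pr m i), A (pr m i)] @ snd p')"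
  have "Phi m q v s t (Gen m q p i p') = Phi m q v s t (\<lambda>r. inverse (q i) * pv ?P1 r + 1 * pv ?P2 r)"
    by (subst Gen_expl[OF i]) (use True in simp)
  also have "\<dots> = inverse (q i) * Phi m q v s t (pv ?P1) + 1 * Phi m q v s t (pv ?P2)"
    by (rule Phi_lin) simp_all
  also have "\<dots> = 0"
    using sw by (cases "fst p = v") (auto simp: Phi_pv isA_def inverse_minus_eq)
  finally show ?thesis .
qed

lemma Phi_IdE: "x \<in> IdE m q \<Longrightarrow> Phi m q v s t x = 0"
proof (induction x rule: IdE.induct)
  case zero thus ?case by simp
next
  case (step y p p' i c)
  have "Phi m q v s t (\<lambda>r. 1 * y r + c * Gen m q p i p' r) = 1 * Phi m q v s t y + c * Phi m q v s t (Gen m q p i p')"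
    by (rule Phi_lin) (auto intro: IdE_fin[OF step(1)] fin_Gen)
  moreover have "Phi m q v s t (Gen m q p i p') = 0" by (rule Phi_Gen) (use step in auto)
  ultimately show ?case using step by simp
qed

abbreviation sortp :: "bool list \<Rightarrow> bool list" where
  "sortp bs \<equiv> replicate (cT bs) True @ replicate (cF bs) False"

lemma span:
  assumes v: "v < m"
  shows "(\<lambda>r. pv (v, mk m v bs) r - kap m q v 0 0 bs * pv (v, mk m v (sortp bs)) r) \<in> IdE m q"
  using v
proof (induction "invc bs" arbitrary: bs rule: less_induct)
  case less
  show ?case
  proof (cases "\<exists>xs ys. bs = xs @ False # True # ys")
    case False
    hence "bs = sortp bs" using no_FT_sorted by blast
    hence k1: "kap m q v 0 0 bs = 1" by (metis kap_sorted)
    have sb: "sortp bs = bs" using \<open>bs = sortp bs\<close> by (rule sym)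
    have "(\<lambda>r. pv (v, mk m v bs) r - kap m q v 0 0 bs * pv (v, mk m v (sortp bs)) r) = (\<lambda>_. 0)"
      unfolding k1 sb by simp
    thus ?thesis by (simp only: IdE.zero)
  next
    case True
    then obtain xs ys where bs: "bs = xs @ False # True # ys" by blast
    define bs' where "bs' = xs @ True # False # ys"
    have lt: "invc bs' < invc bs" unfolding bs bs'_def by (simp add: invc_swap)
    have srt: "sortp bs' = sortp bs" unfolding bs bs'_def by simp
    have IH: "(\<lambda>r. pv (v, mk m v bs') r - kap m q v 0 0 bs' * pv (v, mk m v (sortp bs)) r) \<in> IdE m q"
      using less.hyps[OF lt less.prems] srt by simp
    define i where "i = vert m v (cT xs) (cF xs)"
    have im: "i < m" using less.prems by (simp add: i_def vert_def)
    have ei: "endpt m v (mk m v xs) = i" using endpt_mk[OF less.prems] by (simp add: i_def)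
    have k: "kap m q v 0 0 bs = inverse (- q i) * kap m q v 0 0 bs'"
      unfolding bs bs'_def i_def using kap_swap[of m q v 0 0 xs ys] by simp
    have vp: "valid_path m (v, mk m v xs)" using less.prems by (simp add: valid_path_def valid_walk_mk)
    have vp': "valid_path m (i, mk m i ys)" using im by (simp add: valid_path_def valid_walk_mk)
    have G: "Gen m q (v, mk m v xs) i (i, mk m i ys) \<in> IdE m q" by (rule IdE_Gen[OF vp vp' im])
    have mkbs: "mk m v bs = mk m v xs @ [B (pr m i), A (pr m i)] @ mk m i ys"
      unfolding bs using ei im by (simp add: mk_append Suc_pr)
    have mkbs': "mk m v bs' = mk m v xs @ [A i, B i] @ mk m i ys"
      unfolding bs'_def using ei im by (simp add: mk_append pr_Suc)
    have Ge: "Gen m q (v, mk m v xs) i (i, mk m i ys) = (\<lambda>r. inverse (q i) * pv (v, mk m v bs') r + 1 * pv (v, mk m v bs) r)"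
      using ei by (simp add: Gen_expl[OF im] mkbs mkbs')
    have "(\<lambda>r. 1 * Gen m q (v, mk m v xs) i (i, mk m i ys) r + (- inverse (q i)) * (pv (v, mk m v bs') r - kap m q v 0 0 bs' * pv (v, mk m v (sortp bs)) r)) \<in> IdE m q"
      by (rule IdE_lin[OF G IH])
    thus ?thesis unfolding Ge k by (simp add: algebra_simps inverse_minus_eq)
  qed
qed


lemma mod_cancel: "(x + k) mod m = (y + k) mod m \<Longrightarrow> x mod m = y mod (m::nat)"
  by (simp add: nat_mod_eq_iff)

lemma tm1: "m > 0 \<Longrightarrow> t * (m - 1) + t = t * (m::nat)"
  by (cases m) (simp_all add: algebra_simps)

lemma mod_same_add: "s mod m = t mod m \<Longrightarrow> (v + s) mod m = (v + t) mod (m::nat)"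
proof -
  assume h: "s mod m = t mod m"
  have "(v + s) mod m = (v + s mod m) mod m" by (rule mod_add_right_eq[symmetric])
  also have "\<dots> = (v + t mod m) mod m" using h by simp
  also have "\<dots> = (v + t) mod m" by (rule mod_add_right_eq)
  finally show ?thesis .
qed

lemma vert_self: "m > 0 \<Longrightarrow> v < m \<Longrightarrow> (vert m v s t = v) \<longleftrightarrow> (s mod m = t mod m)"
proof -
  assume m: "m > 0" and v: "v < m"
  have e: "v + s + t * (m - 1) + t = (v + s) + t * m" using tm1[OF m, of t] by simp
  show ?thesis
  proof
    assume h: "vert m v s t = v"
    have "((v + s + t * (m - 1)) mod m + t) mod m = ((v + s + t * (m - 1)) + t) mod m" by (rule mod_add_left_eq)
    hence "((v + s + t * (m - 1)) + t) mod m = (v + t) mod m"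
      using h unfolding vert_def by simp
    hence "(v + s) mod m = (v + t) mod m" unfolding e by simp
    hence "(s + v) mod m = (t + v) mod m" by (simp add: add.commute)
    thus "s mod m = t mod m" by (rule mod_cancel)
  next
    assume h: "s mod m = t mod m"
    have "((v + s + t * (m - 1)) + t) mod m = (v + t) mod m"
      unfolding e using mod_same_add[OF h, of v] by simp
    hence "(v + s + t * (m - 1)) mod m = v mod m" by (rule mod_cancel)
    thus "vert m v s t = v" using v by (simp add: vert_def)
  qed
qed

lemma vert_b: "m > 0 \<Longrightarrow> s mod m = t mod m \<Longrightarrow> b < t \<Longrightarrow> vert m i s b = (i + t - b) mod m"
proof -
  assume m: "m > 0" and h: "s mod m = t mod m" and b: "b < t"
  have e: "i + s + b * (m - 1) + b = (i + s) + b * m" using tm1[OF m, of b] by simp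
  have e2: "(i + t - b) + b = i + t" using b by simp
  have "((i + s + b * (m - 1)) + b) mod m = ((i + t - b) + b) mod m"
    unfolding e e2 using mod_same_add[OF h, of i] by simp
  thus ?thesis unfolding vert_def by (rule mod_cancel)
qed

lemma kap_T: "kap m q v na 0 (replicate k True @ xs) = kap m q v (na + k) 0 xs"
  by (induction k arbitrary: na) auto

lemma kap_F2: "kap m q v na nb (replicate k False @ xs) = kap m q v na (nb + k) xs"
  by (induction k arbitrary: nb) auto

lemma kap_K1: "kap m q v 0 0 (replicate s True @ replicate t False @ [True]) = (\<Prod>b<t. inverse (- q (vert m v s b)))"
  by (simp add: kap_T kap_F2)

lemma kap_K2: "kap m q v 0 0 (True # replicate s True @ replicate t False) = 1"
  using kap_sorted[of m q v 0 "Suc s" t] by simp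

lemma kap_K3: "kap m q v 0 0 (replicate s True @ replicate t False @ [False]) = 1"
  using kap_sorted[of m q v 0 s "Suc t"] by (simp add: replicate_append_same[symmetric])

lemma kap_L0: "kap m q v na (Suc 0) (replicate k True @ replicate t False) = (\<Prod>a\<in>{na..<na+k}. inverse (- q (vert m v a 0)))"
proof (induction k arbitrary: na)
  case 0 thus ?case by (simp add: kap_F)
next
  case (Suc k)
  have "{na..<na + Suc k} = insert na {Suc na..<Suc na + k}" by auto
  thus ?case using Suc by simp
qed

lemma kap_K4: "kap m q v 0 0 (False # replicate s True @ replicate t False) = (\<Prod>a<s. inverse (- q (vert m v a 0)))"
  using kap_L0[of m q v 0 s t] by (simp add: atLeast0LessThan)


lemma Phi_sum: "finite S \<Longrightarrow> (\<And>v. v \<in> S \<Longrightarrow> fin (F v)) \<Longrightarrow> Phi m q w s t (\<lambda>r. \<Sum>v\<in>S. F v r) = (\<Sum>v\<in>S. Phi m q w s t (F v))"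
proof (induction S rule: finite_induct)
  case empty thus ?case by simp
next
  case (insert x S)
  have "Phi m q w s t (\<lambda>r. 1 * F x r + 1 * (\<Sum>v\<in>S. F v r)) = 1 * Phi m q w s t (F x) + 1 * Phi m q w s t (\<lambda>r. \<Sum>v\<in>S. F v r)"
    by (rule Phi_lin) (use insert in \<open>auto intro: fin_sum\<close>)
  thus ?case using insert by simp
qed

lemma Phi_smul: "fin x \<Longrightarrow> Phi m q w s t (\<lambda>r. c * x r) = c * Phi m q w s t x"
  using Phi_lin[of x x m q w s t c 0] by simp

lemma conv_Ysum_right:
  "conv m (\<lambda>r. \<Sum>v<(k::nat). C v * pv (P v) r) (pv a) = (\<lambda>r. \<Sum>v<k. C v * conv m (pv (P v)) (pv a :: path \<Rightarrow> 'k::field) r)"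
  by (subst conv_sum_left) (auto intro: fin_smul simp: conv_smul_left)

lemma conv_Ysum_left:
  "conv m (pv a) (\<lambda>r. \<Sum>v<(k::nat). C v * pv (P v) r) = (\<lambda>r. \<Sum>v<k. C v * conv m (pv a :: path \<Rightarrow> 'k::field) (pv (P v)) r)"
  by (subst conv_sum_right) (auto intro: fin_smul simp: conv_smul_right)

lemma Phi_Ysum:
  "Phi m q w s t (\<lambda>r. \<Sum>v<(k::nat). C v * G v r) = (\<Sum>v<k. C v * Phi m q w s t (G v))" if "\<And>v. fin (G v)"
  using that by (subst Phi_sum) (auto intro: fin_smul simp: Phi_smul)

lemma fin_convpv: "fin (conv m (pv a) (pv b) :: path \<Rightarrow> 'k::field)"
  by (rule fin_conv) auto

lemma KQ_Ysum: "(\<And>v. v < k \<Longrightarrow> valid_path m (P v)) \<Longrightarrow> (\<lambda>r. \<Sum>v<(k::nat). C v * pv (P v) r) \<in> KQ m"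
proof (induction k)
  case 0 thus ?case by (simp add: KQ_iff supp_def)
next
  case (Suc k)
  have "(\<lambda>r. (\<Sum>v<(k::nat). C v * pv (P v) r) + C k * pv (P k) r) \<in> KQ m"
    by (intro KQ_add KQ_smul KQ_pv Suc.IH) (use Suc.prems in auto)
  thus ?case by simp
qed

lemma comm_Y:
  assumes I: "Inv m q z" and Y: "Y \<in> KQ m" and D: "(\<lambda>r. z r - Y r) \<in> IdE m q"
    and thY: "th Y = (\<lambda>r. e * Y r)" and a: "valid_path m a" "plen a = 1"
  shows "(\<lambda>r. conv m Y (pv a) r - e * conv m (pv a) Y r) \<in> IdE m q"
proof -
  have z: "z \<in> KQ m" using I by (simp add: Inv_def)
  have pa: "pv a \<in> KQ m" using a by (simp add: KQ_pv)
  have fz: "fin z" and fY: "fin Y" using z Y by (auto simp: KQ_fin)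
  have H: "(\<lambda>r. conv m z (pv a) r - conv m (pv a) (th z) r) \<in> IdE m q"
    using I a unfolding Inv_def by blast
  have I1: "conv m (\<lambda>r. z r - Y r) (pv a) \<in> IdE m q" by (rule IdE_mult_right[OF D pa])
  have I2: "conv m (pv a) (th (\<lambda>r. z r - Y r)) \<in> IdE m q" by (rule IdE_mult_left[OF IdE_th[OF D] pa])
  have t: "th (\<lambda>r. z r - Y r) = (\<lambda>r. th z r - e * Y r)" using thY by (auto simp: th_def fun_eq_iff algebra_simps)
  have "(\<lambda>r. (conv m z (pv a) r - conv m (pv a) (th z) r) - conv m (\<lambda>r. z r - Y r) (pv a) r + conv m (pv a) (th (\<lambda>r. z r - Y r)) r) \<in> IdE m q"
    using IdE_add[OF I2 IdE_diff[OF H I1]] by simp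
  moreover have "conv m (pv a) (\<lambda>r. th z r - e * Y r) = (\<lambda>r. 1 * conv m (pv a) (th z) r + (- e) * conv m (pv a) Y r)"
    using conv_lin_right[of "th z" Y "pv a" m 1 "- e"] fz fY by simp
  ultimately show ?thesis
    using fz fY by (simp add: t conv_diff_left algebra_simps)
qed


lemma isA_case: "(\<lambda>x. case x of A _ \<Rightarrow> True | B _ \<Rightarrow> False) = isA"
  by (auto simp: isA_def fun_eq_iff)

lemma cT_pat: "cT (pat w) = length (filter isA w)"
  by (simp add: filter_map comp_def)
lemma cF_pat: "cF (pat w) = length (filter (\<lambda>x. \<not> isA x) w)"
  by (simp add: filter_map comp_def)

lemma zdeg_cnt: "zdeg p = int (cT (pat (snd p))) - int (cF (pat (snd p)))"
proof -
  have "(\<lambda>x. case x of A _ \<Rightarrow> False | B _ \<Rightarrow> True) = (\<lambda>x. \<not> isA x)"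
    by (auto simp: isA_def fun_eq_iff split: arr.split)
  thus ?thesis unfolding zdeg_def cT_pat cF_pat isA_case by simp
qed

lemma plen_cnt: "plen p = cT (pat (snd p)) + cF (pat (snd p))"
  unfolding plen_def cT_pat cF_pat by (simp add: sum_length_filter_compl)

definition NF :: "nat \<Rightarrow> nat \<Rightarrow> nat \<Rightarrow> nat \<Rightarrow> path" where
  "NF m s t v = (v, mk m v (replicate s True @ replicate t False))"

lemma y_to_Y:
  assumes y: "y \<in> KQ m" and cnt: "\<And>p. y p \<noteq> 0 \<Longrightarrow> cT (pat (snd p)) = s \<and> cF (pat (snd p)) = t"
  shows "(\<lambda>r. y r - (\<Sum>v<m. Phi m q v s t y * pv (NF m s t v) r)) \<in> IdE m q"
proof -
  have fy: "fin y" using y by (simp add: KQ_fin)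
  let ?k = "\<lambda>p. kap m q (fst p) 0 0 (pat (snd p))"
  have sp: "(\<lambda>r. y p * (pv p r - ?k p * pv (NF m s t (fst p)) r)) \<in> IdE m q" if p: "p \<in> supp y" for p
  proof -
    have vp: "valid_path m p" using y p by (simp add: KQ_iff)
    hence fp: "fst p < m" by (simp add: valid_path_def valid_walk_lt)
    have w: "snd p = mk m (fst p) (pat (snd p))" using vp by (simp add: valid_path_def valid_mk)
    have c: "cT (pat (snd p)) = s" "cF (pat (snd p)) = t" using cnt p by (auto simp: supp_def)
    have "(\<lambda>r. pv (fst p, mk m (fst p) (pat (snd p))) r - ?k p * pv (fst p, mk m (fst p) (sortp (pat (snd p)))) r) \<in> IdE m q"
      by (rule span[OF fp])
    hence "(\<lambda>r. pv p r - ?k p * pv (NF m s t (fst p)) r) \<in> IdE m q"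
      using w c by (simp add: NF_def)
    thus ?thesis by (rule IdE_smul)
  qed
  have S: "(\<lambda>r. \<Sum>p\<in>supp y. y p * (pv p r - ?k p * pv (NF m s t (fst p)) r)) \<in> IdE m q"
    by (rule IdE_sum[OF fy sp])
  have e1: "(\<Sum>p\<in>supp y. y p * pv p r) = y r" for r
    using fun_cong[OF decomp[OF fy], of r] by simp
  have e2: "(\<Sum>v<m. Phi m q v s t y * pv (NF m s t v) r) = (\<Sum>p\<in>supp y. y p * ?k p * pv (NF m s t (fst p)) r)" for r
  proof -
    have "(\<Sum>v<m. Phi m q v s t y * pv (NF m s t v) r) = (\<Sum>v<m. \<Sum>p\<in>supp y. if fst p = v then y p * ?k p * pv (NF m s t v) r else 0)"
    proof (intro sum.cong refl)
      fix v
      show "Phi m q v s t y * pv (NF m s t v) r = (\<Sum>p\<in>supp y. if fst p = v then y p * ?k p * pv (NF m s t v) r else 0)"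
        unfolding Phi_def sum_distrib_right
        by (intro sum.cong refl) (use cnt in \<open>auto simp: supp_def\<close>)
    qed
    also have "\<dots> = (\<Sum>p\<in>supp y. \<Sum>v<m. if fst p = v then y p * ?k p * pv (NF m s t v) r else 0)"
      by (rule sum.swap)
    also have "\<dots> = (\<Sum>p\<in>supp y. y p * ?k p * pv (NF m s t (fst p)) r)"
    proof (intro sum.cong refl)
      fix p assume p: "p \<in> supp y"
      have vp: "valid_path m p" using y p by (simp add: KQ_iff)
      hence fp: "fst p < m" by (simp add: valid_path_def valid_walk_lt)
      show "(\<Sum>v<m. if fst p = v then y p * ?k p * pv (NF m s t v) r else 0) = y p * ?k p * pv (NF m s t (fst p)) r"
        using fp by (simp add: sum.delta)
    qed
    finally show ?thesis .
  qed
  have "(\<lambda>r. \<Sum>p\<in>supp y. y p * (pv p r - ?k p * pv (NF m s t (fst p)) r)) = (\<lambda>r. y r - (\<Sum>v<m. Phi m q v s t y * pv (NF m s t v) r))"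
  proof
    fix r
    have "(\<Sum>p\<in>supp y. y p * (pv p r - ?k p * pv (NF m s t (fst p)) r)) = (\<Sum>p\<in>supp y. y p * pv p r) - (\<Sum>p\<in>supp y. y p * ?k p * pv (NF m s t (fst p)) r)"
      by (simp add: sum_subtractf algebra_simps)
    thus "(\<Sum>p\<in>supp y. y p * (pv p r - ?k p * pv (NF m s t (fst p)) r)) = y r - (\<Sum>v<m. Phi m q v s t y * pv (NF m s t v) r)"
      using e1 e2 by simp
  qed
  thus ?thesis using S by simp
qed


lemma cnt_sorted[simp]: "cT (replicate s True @ replicate t False) = s" "cF (replicate s True @ replicate t False) = t"
  by (simp_all add: filter_replicate)

lemma endpt_NF: "v < m \<Longrightarrow> endpt m (fst (NF m s t v)) (snd (NF m s t v)) = vert m v s t"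
  by (simp add: NF_def endpt_mk)

lemma E1:
  fixes C :: "nat \<Rightarrow> 'k::field" and m s t :: nat
  defines "Y \<equiv> (\<lambda>r. \<Sum>v<m. C v * pv (NF m s t v) r)"
  assumes m: "m > 0" and j: "j < m"
    and H: "(\<lambda>r. conv m Y (pv (j, [A j])) r - e * conv m (pv (j, [A j])) Y r) \<in> IdE m q"
  shows "C j * (if vert m j s t = j then (\<Prod>b<t. inverse (- q (vert m j s b))) else 0) - e * C (Suc j mod m) = 0"
proof -
  let ?a = "(j, [A j])"
  have R: "Phi m q j (Suc s) t (conv m Y (pv ?a)) = C j * (if vert m j s t = j then (\<Prod>b<t. inverse (- q (vert m j s b))) else 0)"
  proof -
    have "Phi m q j (Suc s) t (conv m Y (pv ?a)) = (\<Sum>v<m. C v * Phi m q j (Suc s) t (conv m (pv (NF m s t v)) (pv ?a)))"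
      unfolding Y_def conv_Ysum_right by (rule Phi_Ysum) (rule fin_convpv)
    also have "\<dots> = (\<Sum>v<m. if v = j then C j * (if vert m j s t = j then (\<Prod>b<t. inverse (- q (vert m j s b))) else 0) else 0)"
    proof (intro sum.cong refl)
      fix v assume v: "v \<in> {..<m}"
      show "C v * Phi m q j (Suc s) t (conv m (pv (NF m s t v)) (pv ?a)) = (if v = j then C j * (if vert m j s t = j then (\<Prod>b<t. inverse (- q (vert m j s b))) else 0) else 0)"
        using v by (auto simp: conv_pv_pv endpt_mk Phi_pv cat_def NF_def isA_def kap_K1)
    qed
    also have "\<dots> = C j * (if vert m j s t = j then (\<Prod>b<t. inverse (- q (vert m j s b))) else 0)"
      using j by (simp add: sum.delta')
    finally show ?thesis .
  qed
  have L: "Phi m q j (Suc s) t (conv m (pv ?a) Y) = C (Suc j mod m)"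
  proof -
    have "Phi m q j (Suc s) t (conv m (pv ?a) Y) = (\<Sum>v<m. C v * Phi m q j (Suc s) t (conv m (pv ?a) (pv (NF m s t v))))"
      unfolding Y_def conv_Ysum_left by (rule Phi_Ysum) (rule fin_convpv)
    also have "\<dots> = (\<Sum>v<m. if v = Suc j mod m then C v else 0)"
    proof (intro sum.cong refl)
      fix v assume v: "v \<in> {..<m}"
      show "C v * Phi m q j (Suc s) t (conv m (pv ?a) (pv (NF m s t v))) = (if v = Suc j mod m then C v else 0)"
        using v kap_K2[of m q j s t] by (auto simp: conv_pv_pv Phi_pv cat_def NF_def isA_def)
    qed
    also have "\<dots> = C (Suc j mod m)" using m by (simp add: sum.delta')
    finally show ?thesis .
  qed
  have fY: "fin Y" unfolding Y_def by (rule fin_sum) (auto intro: fin_smul)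
  have "Phi m q j (Suc s) t (\<lambda>r. 1 * conv m Y (pv ?a) r + (- e) * conv m (pv ?a) Y r) = 1 * Phi m q j (Suc s) t (conv m Y (pv ?a)) + (- e) * Phi m q j (Suc s) t (conv m (pv ?a) Y)"
    by (rule Phi_lin) (auto intro: fin_conv fY)
  moreover have "Phi m q j (Suc s) t (\<lambda>r. conv m Y (pv ?a) r - e * conv m (pv ?a) Y r) = 0"
    by (rule Phi_IdE[OF H])
  ultimately show ?thesis using R L by simp
qed

lemma E2:
  fixes C :: "nat \<Rightarrow> 'k::field" and m s t :: nat
  defines "Y \<equiv> (\<lambda>r. \<Sum>v<m. C v * pv (NF m s t v) r)"
  assumes m: "m > 0" and j: "j < m"
    and H: "(\<lambda>r. conv m Y (pv (Suc j mod m, [B j])) r - e * conv m (pv (Suc j mod m, [B j])) Y r) \<in> IdE m q"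
  shows "C (Suc j mod m) * (if vert m (Suc j mod m) s t = Suc j mod m then 1 else 0)
          - e * (C j * (\<Prod>a<s. inverse (- q (vert m (Suc j mod m) a 0)))) = 0"
proof -
  let ?a = "(Suc j mod m, [B j])" and ?w = "Suc j mod m"
  have w: "?w < m" using m by simp
  have R: "Phi m q ?w s (Suc t) (conv m Y (pv ?a)) = C ?w * (if vert m ?w s t = ?w then 1 else 0)"
  proof -
    have "Phi m q ?w s (Suc t) (conv m Y (pv ?a)) = (\<Sum>v<m. C v * Phi m q ?w s (Suc t) (conv m (pv (NF m s t v)) (pv ?a)))"
      unfolding Y_def conv_Ysum_right by (rule Phi_Ysum) (rule fin_convpv)
    also have "\<dots> = (\<Sum>v<m. if v = ?w then C ?w * (if vert m ?w s t = ?w then 1 else 0) else 0)"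
    proof (intro sum.cong refl)
      fix v assume v: "v \<in> {..<m}"
      show "C v * Phi m q ?w s (Suc t) (conv m (pv (NF m s t v)) (pv ?a)) = (if v = ?w then C ?w * (if vert m ?w s t = ?w then 1 else 0) else 0)"
        using v kap_K3[of m q v s t] by (auto simp: conv_pv_pv endpt_mk Phi_pv cat_def NF_def isA_def)
    qed
    also have "\<dots> = C ?w * (if vert m ?w s t = ?w then 1 else 0)"
      using w by (simp add: sum.delta')
    finally show ?thesis .
  qed
  have L: "Phi m q ?w s (Suc t) (conv m (pv ?a) Y) = C j * (\<Prod>a<s. inverse (- q (vert m ?w a 0)))"
  proof -
    have "Phi m q ?w s (Suc t) (conv m (pv ?a) Y) = (\<Sum>v<m. C v * Phi m q ?w s (Suc t) (conv m (pv ?a) (pv (NF m s t v))))"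
      unfolding Y_def conv_Ysum_left by (rule Phi_Ysum) (rule fin_convpv)
    also have "\<dots> = (\<Sum>v<m. if v = j then C j * (\<Prod>a<s. inverse (- q (vert m ?w a 0))) else 0)"
    proof (intro sum.cong refl)
      fix v assume v: "v \<in> {..<m}"
      show "C v * Phi m q ?w s (Suc t) (conv m (pv ?a) (pv (NF m s t v))) = (if v = j then C j * (\<Prod>a<s. inverse (- q (vert m ?w a 0))) else 0)"
        using v kap_K4[of m q ?w s t] by (auto simp: conv_pv_pv Phi_pv cat_def NF_def isA_def)
    qed
    also have "\<dots> = C j * (\<Prod>a<s. inverse (- q (vert m ?w a 0)))" using j by (simp add: sum.delta')
    finally show ?thesis .
  qed
  have fY: "fin Y" unfolding Y_def by (rule fin_sum) (auto intro: fin_smul)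
  have "Phi m q ?w s (Suc t) (\<lambda>r. 1 * conv m Y (pv ?a) r + (- e) * conv m (pv ?a) Y r) = 1 * Phi m q ?w s (Suc t) (conv m Y (pv ?a)) + (- e) * Phi m q ?w s (Suc t) (conv m (pv ?a) Y)"
    by (rule Phi_lin) (auto intro: fin_conv fY)
  moreover have "Phi m q ?w s (Suc t) (\<lambda>r. conv m Y (pv ?a) r - e * conv m (pv ?a) Y r) = 0"
    by (rule Phi_IdE[OF H])
  ultimately show ?thesis using R L by simp
qed


lemma mkT: "v < m \<Longrightarrow> mk m v (replicate s True) = map (\<lambda>j. A ((v + j) mod m)) [0..<s]"
proof (induction s arbitrary: v)
  case 0 thus ?case by simp
next
  case (Suc s)
  have m: "m > 0" using Suc.prems by simp
  have "mk m v (replicate (Suc s) True) = A v # map (\<lambda>j. A ((Suc v mod m + j) mod m)) [0..<s]"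
    using Suc m by simp
  also have "map (\<lambda>j. A ((Suc v mod m + j) mod m)) [0..<s] = map (\<lambda>j. A ((v + Suc j) mod m)) [0..<s]"
    by (simp add: mod_add_left_eq)
  also have "A v # map (\<lambda>j. A ((v + Suc j) mod m)) [0..<s] = map (\<lambda>j. A ((v + j) mod m)) [0..<Suc s]"
    using Suc.prems by (simp add: map_upt_Suc del: upt_Suc)
  finally show ?case .
qed

lemma mkF: "u < m \<Longrightarrow> mk m u (replicate t False) = map (\<lambda>j. B ((u + Suc j * (m - 1)) mod m)) [0..<t]"
proof (induction t arbitrary: u)
  case 0 thus ?case by simp
next
  case (Suc t)
  have m: "m > 0" using Suc.prems by simp
  have pu: "pr m u < m" using m by simp
  have "mk m u (replicate (Suc t) False) = B (pr m u) # map (\<lambda>j. B ((pr m u + Suc j * (m - 1)) mod m)) [0..<t]"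
    using Suc.IH[OF pu] by simp
  also have "map (\<lambda>j. B ((pr m u + Suc j * (m - 1)) mod m)) [0..<t] = map (\<lambda>j. B ((u + Suc (Suc j) * (m - 1)) mod m)) [0..<t]"
  proof (rule map_cong[OF refl])
    fix j
    have "(pr m u + Suc j * (m - 1)) mod m = ((u + m - Suc 0) + Suc j * (m - 1)) mod m"
      by (simp add: mod_add_left_eq)
    also have "(u + m - Suc 0) + Suc j * (m - 1) = u + Suc (Suc j) * (m - 1)" using m by simp
    finally show "B ((pr m u + Suc j * (m - 1)) mod m) = B ((u + Suc (Suc j) * (m - 1)) mod m)" by simp
  qed
  also have "B (pr m u) = B ((u + Suc 0 * (m - 1)) mod m)" using m by simp
  also have "B ((u + Suc 0 * (m - 1)) mod m) # map (\<lambda>j. B ((u + Suc (Suc j) * (m - 1)) mod m)) [0..<t]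
      = map (\<lambda>j. B ((u + Suc j * (m - 1)) mod m)) [0..<Suc t]"
    by (simp add: map_upt_Suc del: upt_Suc)
  finally show ?case .
qed

lemma gam_mk: "i < m \<Longrightarrow> gam m i s = (i, mk m i (replicate s True))"
  by (simp add: gam_def mkT)

lemma dlt_mk:
  assumes i: "i < m"
  shows "dlt m i t = ((i + t) mod m, mk m ((i + t) mod m) (replicate t False))"
proof -
  have m: "m > 0" using i by simp
  let ?u = "(i + t) mod m"
  have "map (\<lambda>j. B ((i + t - 1 - j) mod m)) [0..<t] = map (\<lambda>j. B ((?u + Suc j * (m - 1)) mod m)) [0..<t]"
  proof (rule map_cong[OF refl])
    fix j assume "j \<in> set [0..<t]"
    hence j: "j < t" by simp
    have e1: "?u + Suc j * (m - 1) + Suc j = ?u + Suc j * m" using tm1[OF m, of "Suc j"] by simp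
    have e2: "(i + t - 1 - j) + Suc j = i + t" using j by simp
    have "((i + t - 1 - j) + Suc j) mod m = ((?u + Suc j * (m - 1)) + Suc j) mod m"
      unfolding e1 e2 by (simp only: mod_mult_self1 mod_mod_trivial)
    hence "(i + t - 1 - j) mod m = (?u + Suc j * (m - 1)) mod m" by (rule mod_cancel)
    thus "B ((i + t - 1 - j) mod m) = B ((?u + Suc j * (m - 1)) mod m)" by simp
  qed
  thus ?thesis using m by (simp add: dlt_def mkF)
qed

lemma gam_dlt:
  assumes i: "i < m" and st: "s mod m = t mod m"
  shows "conv m (pv (gam m i s)) (pv (dlt m i t)) = (pv (NF m s t i) :: path \<Rightarrow> 'k::field)"
proof -
  have m: "m > 0" using i by simp
  have e: "endpt m i (mk m i (replicate s True)) = (i + t) mod m"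
    using endpt_mk[OF i, of "replicate s True"] mod_same_add[OF st, of i] by (simp add: vert_def)
  show ?thesis
    using e by (simp add: gam_mk[OF i] dlt_mk[OF i] conv_pv_pv cat_def NF_def mk_append)
qed

lemma window:
  fixes m :: nat
  assumes m: "m > 0" and q: "\<forall>k<m. q k \<noteq> (0::'k::field)"
  shows "(\<Prod>k\<in>{a..<a+m}. q (k mod m)) = (\<Prod>k<m. q k)"
proof (induction a)
  case 0 thus ?case by (simp add: atLeast0LessThan)
next
  case (Suc a)
  have "q (a mod m) * (\<Prod>k\<in>{Suc a..<Suc a + m}. q (k mod m)) = (\<Prod>k\<in>{a..<Suc (a + m)}. q (k mod m))"
    using m by (subst prod.atLeast_Suc_lessThan[of a]) simp_all
  also have "\<dots> = (\<Prod>k\<in>{a..<a + m}. q (k mod m)) * q ((a + m) mod m)"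
    by (rule prod.atLeastLessThan_Suc) simp
  also have "\<dots> = q (a mod m) * (\<Prod>k<m. q k)" using Suc by simp
  finally show ?case using q m by simp
qed

lemma window2:
  fixes m :: nat
  assumes m: "m > 0" and q: "\<forall>k<m. q k \<noteq> (0::'k::field)"
  shows "(\<Prod>k\<in>{1..m}. \<Prod>j\<in>{k..<k + t}. q (j mod m)) = (\<Prod>k<m. q k) ^ t"
proof -
  have "(\<Prod>k\<in>{1..m}. \<Prod>j\<in>{k..<k + t}. q (j mod m)) = (\<Prod>k\<in>{1..m}. \<Prod>b<t. q ((k + b) mod m))"
  proof (rule prod.cong[OF refl])
    fix k
    show "(\<Prod>j\<in>{k..<k + t}. q (j mod m)) = (\<Prod>b<t. q ((k + b) mod m))"
      using prod.shift_bounds_nat_ivl[of "\<lambda>j. q (j mod m)" 0 k t]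
      by (simp add: atLeast0LessThan add.commute)
  qed
  also have "\<dots> = (\<Prod>b<t. \<Prod>k\<in>{1..m}. q ((k + b) mod m))" by (rule prod.swap)
  also have "\<dots> = (\<Prod>b<t. \<Prod>k<m. q k)"
  proof (rule prod.cong[OF refl])
    fix b
    have "{1..m} = {1..<1 + m}" by auto
    hence "(\<Prod>k\<in>{1..m}. q ((k + b) mod m)) = (\<Prod>k\<in>{1 + b..<1 + b + m}. q (k mod m))"
      using prod.shift_bounds_nat_ivl[of "\<lambda>j. q (j mod m)" 1 b "1 + m"] by (simp add: add.commute add.left_commute)
    also have "\<dots> = (\<Prod>k<m. q k)" by (rule window[OF m q])
    finally show "(\<Prod>k\<in>{1..m}. q ((k + b) mod m)) = (\<Prod>k<m. q k)" .
  qed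
  finally show ?thesis by simp
qed


lemma neg1_sq: "((-1::'k::field) ^ t) * (-1) ^ t = 1"
  by (simp add: power_mult_distrib[symmetric])

lemma prod_inv_neg: "(\<Prod>b\<in>S. inverse (- f b)) = (-1) ^ card S * inverse (\<Prod>b\<in>S. (f b :: 'k::field))"
proof -
  have "(\<Prod>b\<in>S. inverse (- f b)) = (\<Prod>b\<in>S. (-1) * inverse (f b))"
    by (intro prod.cong refl) (simp add: inverse_minus_eq)
  also have "\<dots> = (\<Prod>b\<in>S. (-1::'k)) * (\<Prod>b\<in>S. inverse (f b))"
    by (rule prod.distrib)
  also have "(\<Prod>b\<in>S. (-1::'k)) = (-1) ^ card S" by simp
  also have "(\<Prod>b\<in>S. inverse (f b)) = inverse (\<Prod>b\<in>S. f b)"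
    using prod_inversef[of f S] by (simp add: comp_def)
  finally show ?thesis .
qed

lemma KL1:
  fixes q :: "nat \<Rightarrow> 'k::field"
  assumes m: "m > 0" and st: "s mod m = t mod m"
  shows "(-1) ^ (s + t) * (\<Prod>b<t. inverse (- q (vert m j s b))) = (-1) ^ s * inverse (\<Prod>k\<in>{Suc j..<Suc j + t}. q (k mod m))"
proof -
  have r: "(\<Prod>b<t. q (vert m j s b)) = (\<Prod>k\<in>{Suc j..<Suc j + t}. q (k mod m))"
  proof (rule prod.reindex_bij_witness[where i = "\<lambda>k. j + t - k" and j = "\<lambda>b. j + t - b"])
    fix b assume "b \<in> {..<t}"
    thus "j + t - (j + t - b) = b" "j + t - b \<in> {Suc j..<Suc j + t}" "q ((j + t - b) mod m) = q (vert m j s b)"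
      using vert_b[OF m st, of b j] by auto
  next
    fix k assume "k \<in> {Suc j..<Suc j + t}"
    thus "j + t - (j + t - k) = k" "j + t - k \<in> {..<t}" by auto
  qed
  show ?thesis
    unfolding prod_inv_neg r by (simp add: power_add mult.assoc[symmetric] neg1_sq mult.commute[of "(-1) ^ s"])
qed

lemma KL2:
  fixes q :: "nat \<Rightarrow> 'k::field"
  assumes m: "m > 0"
  shows "(-1) ^ (s + t) * (\<Prod>a<s. inverse (- q (vert m (Suc j mod m) a 0))) = (-1) ^ t * inverse (\<Prod>k\<in>{Suc j..<Suc j + s}. q (k mod m))"
proof -
  have r: "(\<Prod>a<s. q (vert m (Suc j mod m) a 0)) = (\<Prod>k\<in>{Suc j..<Suc j + s}. q (k mod m))"
  proof -
    have "(\<Prod>a<s. q (vert m (Suc j mod m) a 0)) = (\<Prod>a<s. q ((a + Suc j) mod m))"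
    proof (rule prod.cong[OF refl])
      fix a
      have "(Suc j mod m + a) mod m = (Suc j + a) mod m" by (rule mod_add_left_eq)
      thus "q (vert m (Suc j mod m) a 0) = q ((a + Suc j) mod m)" by (simp add: vert_def add.commute)
    qed
    also have "\<dots> = (\<Prod>k\<in>{0 + Suc j..<s + Suc j}. q (k mod m))"
      by (subst prod.shift_bounds_nat_ivl) (simp add: atLeast0LessThan)
    finally show ?thesis by (simp add: add.commute)
  qed
  show ?thesis
    unfolding prod_inv_neg r by (simp add: power_add mult.assoc[symmetric] neg1_sq)
qed


lemma length_mk: "length (mk m v bs) = length bs"
  by (metis length_map pat_mk)

lemma valid_NF: "v < m \<Longrightarrow> valid_path m (NF m s t v)"
  by (simp add: NF_def valid_path_def valid_walk_mk)

lemma plen_NF: "plen (NF m s t v) = s + t"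
  by (simp add: NF_def plen_def length_mk)

theorem mainTheorem3:
  fixes m :: nat and q :: "nat \<Rightarrow> 'k::field" and z :: "path \<Rightarrow> 'k"
  assumes "m \<ge> 1"
    and "\<forall>k<m. q k \<noteq> 0"
    and "z \<in> KQ m"
    and "z \<in> Zgr m q"
    and "z \<notin> IdE m q"
    and "\<exists>n d. bi_hom m q n d z"
  shows "\<exists>s t c0. c0 \<noteq> 0 \<and> s mod m = t mod m \<and>
     (let c = (\<lambda>i. (-1) ^ (i * s) *
                (\<Prod>k\<in>{1..i}. inverse (\<Prod>j\<in>{k..<k + t}. q (j mod m))) * c0)
      in (\<lambda>r. z r - (\<Sum>i<m. c i * conv m (pv (gam m i s)) (pv (dlt m i t)) r)) \<in> IdE m q
         \<and> (\<forall>i<m. c i = (-1) ^ (i * t) *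
                (\<Prod>k\<in>{1..i}. inverse (\<Prod>j\<in>{k..<k + s}. q (j mod m))) * c0))
     \<and> (\<Prod>k<m. q k) ^ s = (-1) ^ (m * t)
     \<and> (\<Prod>k<m. q k) ^ t = (-1) ^ (m * s)"
proof -
  have m0: "m > 0" using assms(1) by simp
  obtain n d where "bi_hom m q n d z" using assms(6) by blast
  then obtain y where y: "y \<in> KQ m" "(\<lambda>r. z r - y r) \<in> IdE m q"
      "\<forall>p. y p \<noteq> 0 \<longrightarrow> plen p = n \<and> zdeg p = d"
    unfolding bi_hom_def by blast
  have Iz: "Inv m q z" by (rule Zgr_Inv[OF assms(4)])
  obtain p0 where p0: "y p0 \<noteq> 0"
  proof (cases "\<exists>p. y p \<noteq> 0")
    case True thus ?thesis using that by blast
  next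
    case False
    hence "(\<lambda>r. z r - y r) = z" by (auto simp: fun_eq_iff)
    thus ?thesis using y(2) assms(5) by simp
  qed
  define s where "s = cT (pat (snd p0))"
  define t where "t = cF (pat (snd p0))"
  have cnt: "cT (pat (snd p)) = s \<and> cF (pat (snd p)) = t" if p: "y p \<noteq> 0" for p
  proof -
    have "plen p = plen p0" "zdeg p = zdeg p0" using y(3)[rule_format, OF p] y(3)[rule_format, OF p0] by auto
    thus ?thesis unfolding plen_cnt zdeg_cnt s_def t_def by linarith
  qed
  have n: "n = s + t" using y(3)[rule_format, OF p0] by (simp add: plen_cnt s_def t_def)
  define C where "C v = Phi m q v s t y" for v
  define Y where "Y = (\<lambda>r. \<Sum>v<m. C v * pv (NF m s t v) r)"
  have yY: "(\<lambda>r. y r - Y r) \<in> IdE m q"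
    using y_to_Y[OF y(1) cnt] by (simp add: Y_def C_def)
  have zY: "(\<lambda>r. z r - Y r) \<in> IdE m q"
    using IdE_add[OF yY y(2)] by simp
  have KY: "Y \<in> KQ m" unfolding Y_def by (rule KQ_Ysum) (rule valid_NF)
  have thY: "th Y = (\<lambda>r. (-1) ^ n * Y r)"
  proof
    fix r
    have "th Y r = (\<Sum>v<m. C v * ((-1) ^ plen r * pv (NF m s t v) r))"
      by (simp add: th_def Y_def sum_distrib_left algebra_simps)
    also have "\<dots> = (\<Sum>v<m. C v * ((-1) ^ n * pv (NF m s t v) r))"
      by (intro sum.cong refl) (auto simp: pv_def plen_NF n)
    also have "\<dots> = (-1) ^ n * Y r" by (simp add: Y_def sum_distrib_left algebra_simps)
    finally show "th Y r = (-1) ^ n * Y r" .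
  qed
  have comm: "(\<lambda>r. conv m Y (pv a) r - (-1) ^ n * conv m (pv a) Y r) \<in> IdE m q"
    if "valid_path m a" "plen a = 1" for a
    by (rule comm_Y[OF Iz KY zY thY that])
  let ?K = "\<lambda>j. (\<Prod>b<t. inverse (- q (vert m j s b)))"
  let ?L = "\<lambda>j. (\<Prod>a<s. inverse (- q (vert m (Suc j mod m) a 0)))"
  have e1: "C j * (if vert m j s t = j then ?K j else 0) - (-1) ^ n * C (Suc j mod m) = 0" if j: "j < m" for j
  proof -
    have "(\<lambda>r. conv m Y (pv (j, [A j])) r - (-1) ^ n * conv m (pv (j, [A j])) Y r) \<in> IdE m q"
      by (rule comm) (use j m0 in \<open>auto simp: valid_path_def plen_def\<close>)
    from E1[OF m0 j this[unfolded Y_def]] show ?thesis .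
  qed
  have e2: "C (Suc j mod m) * (if vert m (Suc j mod m) s t = Suc j mod m then 1 else 0) - (-1) ^ n * (C j * ?L j) = 0"
    if j: "j < m" for j
  proof -
    have "(\<lambda>r. conv m Y (pv (Suc j mod m, [B j])) r - (-1) ^ n * conv m (pv (Suc j mod m, [B j])) Y r) \<in> IdE m q"
      by (rule comm) (use j m0 in \<open>auto simp: valid_path_def plen_def\<close>)
    from E2[OF m0 j this[unfolded Y_def]] show ?thesis .
  qed
  have nz: "\<exists>v<m. C v \<noteq> 0"
  proof (rule ccontr)
    assume "\<not> (\<exists>v<m. C v \<noteq> 0)"
    hence "Y = (\<lambda>_. 0)" by (auto simp: Y_def fun_eq_iff)
    hence "(\<lambda>r. z r - Y r) = z" by simp
    thus False using zY assms(5) by simp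
  qed
  have st: "s mod m = t mod m"
  proof (rule ccontr)
    assume ne: "s mod m \<noteq> t mod m"
    have "C v = 0" if v: "v < m" for v
    proof -
      have j: "pr m v < m" using m0 by simp
      have "vert m (pr m v) s t \<noteq> pr m v" using vert_self[OF m0 j] ne by simp
      hence "(-1) ^ n * C (Suc (pr m v) mod m) = 0" using e1[OF j] by simp
      thus ?thesis using Suc_pr[OF v] by simp
    qed
    thus False using nz by blast
  qed
  have sgn: "(-1::'k) ^ n * (-1) ^ n = 1" by (rule neg1_sq)
  have rec1: "C (Suc j mod m) = (-1) ^ s * inverse (\<Prod>k\<in>{Suc j..<Suc j + t}. q (k mod m)) * C j" if j: "j < m" for j
  proof -
    have "C j * ?K j = (-1) ^ n * C (Suc j mod m)" using e1[OF j] vert_self[OF m0 j] st by simp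
    hence "(-1) ^ n * (C j * ?K j) = C (Suc j mod m)" using sgn by (metis mult.assoc mult_1)
    thus ?thesis using KL1[OF m0 st, of q j] n by (metis mult.assoc mult.commute)
  qed
  have rec2: "C (Suc j mod m) = (-1) ^ t * inverse (\<Prod>k\<in>{Suc j..<Suc j + s}. q (k mod m)) * C j" if j: "j < m" for j
  proof -
    have w: "Suc j mod m < m" using m0 by simp
    have "C (Suc j mod m) = (-1) ^ n * (C j * ?L j)" using e2[OF j] vert_self[OF m0 w] st by simp
    thus ?thesis using KL2[OF m0, of s t q j] n by (metis mult.assoc mult.commute)
  qed
  define c0 where "c0 = C 0"
  define c where "c i = (-1) ^ (i * s) * (\<Prod>k\<in>{1..i}. inverse (\<Prod>j\<in>{k..<k + t}. q (j mod m))) * c0" for i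
  define c' where "c' i = (-1) ^ (i * t) * (\<Prod>k\<in>{1..i}. inverse (\<Prod>j\<in>{k..<k + s}. q (j mod m))) * c0" for i
  have cS: "c (Suc i) = (-1) ^ s * inverse (\<Prod>k\<in>{Suc i..<Suc i + t}. q (k mod m)) * c i" for i
  proof -
    have "{1..Suc i} = insert (Suc i) {1..i}" by auto
    thus ?thesis by (simp add: c_def power_add algebra_simps)
  qed
  have cS': "c' (Suc i) = (-1) ^ t * inverse (\<Prod>k\<in>{Suc i..<Suc i + s}. q (k mod m)) * c' i" for i
  proof -
    have "{1..Suc i} = insert (Suc i) {1..i}" by auto
    thus ?thesis by (simp add: c'_def power_add algebra_simps)
  qed
  have Cc: "C i = c i \<and> C i = c' i" if "i < m" for i
    using that
  proof (induction i)
    case 0 thus ?case by (simp add: c_def c'_def c0_def)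
  next
    case (Suc i)
    have i: "i < m" using Suc by simp
    have s0: "C (Suc i) = C (Suc i mod m)" using Suc by simp
    have IH1: "C i = c i" and IH2: "C i = c' i" using Suc.IH[OF i] by auto
    have a1: "C (Suc i) = c (Suc i)"
    proof -
      have "C (Suc i) = (-1) ^ s * inverse (\<Prod>k\<in>{Suc i..<Suc i + t}. q (k mod m)) * C i"
        unfolding s0 by (rule rec1[OF i])
      also have "\<dots> = c (Suc i)" unfolding cS IH1 ..
      finally show ?thesis .
    qed
    have a2: "C (Suc i) = c' (Suc i)"
    proof -
      have "C (Suc i) = (-1) ^ t * inverse (\<Prod>k\<in>{Suc i..<Suc i + s}. q (k mod m)) * C i"
        unfolding s0 by (rule rec2[OF i])
      also have "\<dots> = c' (Suc i)" unfolding cS' IH2 ..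
      finally show ?thesis .
    qed
    show ?case using a1 a2 by (rule conjI)
  qed
  have c0nz: "c0 \<noteq> 0"
  proof
    assume "c0 = 0"
    hence "C v = 0" if "v < m" for v using Cc[OF that] by (simp add: c_def)
    thus False using nz by blast
  qed
  have last: "m - 1 < m" "Suc (m - 1) = m" using m0 by auto
  have cm: "c m = c0"
  proof -
    have h: "C (m - 1) = c (m - 1)" using Cc[OF last(1)] by blast
    have "C 0 = C (Suc (m - 1) mod m)" using last by simp
    also have "\<dots> = (-1) ^ s * inverse (\<Prod>k\<in>{Suc (m - 1)..<Suc (m - 1) + t}. q (k mod m)) * C (m - 1)"
      by (rule rec1[OF last(1)])
    also have "\<dots> = c (Suc (m - 1))" unfolding cS h ..
    finally show ?thesis using last by (simp add: c0_def)
  qed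
  have cm': "c' m = c0"
  proof -
    have h: "C (m - 1) = c' (m - 1)" using Cc[OF last(1)] by blast
    have "C 0 = C (Suc (m - 1) mod m)" using last by simp
    also have "\<dots> = (-1) ^ t * inverse (\<Prod>k\<in>{Suc (m - 1)..<Suc (m - 1) + s}. q (k mod m)) * C (m - 1)"
      by (rule rec2[OF last(1)])
    also have "\<dots> = c' (Suc (m - 1))" unfolding cS' h ..
    finally show ?thesis using last by (simp add: c0_def)
  qed
  have inv_eq: "b = a" if "a * inverse b = 1" for a b :: 'k
  proof -
    have "b \<noteq> 0" using that by auto
    thus ?thesis using that by (simp add: field_simps)
  qed
  have Z1: "(\<Prod>k<m. q k) ^ t = (-1) ^ (m * s)"
  proof -
    have "(-1) ^ (m * s) * (\<Prod>k\<in>{1..m}. inverse (\<Prod>j\<in>{k..<k + t}. q (j mod m))) * c0 = 1 * c0"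
      using cm by (simp add: c_def)
    hence "(-1) ^ (m * s) * (\<Prod>k\<in>{1..m}. inverse (\<Prod>j\<in>{k..<k + t}. q (j mod m))) = 1"
      using c0nz by (metis mult_right_cancel)
    hence "(-1) ^ (m * s) * inverse (\<Prod>k\<in>{1..m}. \<Prod>j\<in>{k..<k + t}. q (j mod m)) = 1"
      using prod_inversef[of "\<lambda>k. \<Prod>j\<in>{k..<k + t}. q (j mod m)" "{1..m}"] by (simp add: comp_def)
    thus ?thesis using inv_eq window2[OF m0 assms(2)] by simp
  qed
  have Z2: "(\<Prod>k<m. q k) ^ s = (-1) ^ (m * t)"
  proof -
    have "(-1) ^ (m * t) * (\<Prod>k\<in>{1..m}. inverse (\<Prod>j\<in>{k..<k + s}. q (j mod m))) * c0 = 1 * c0"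
      using cm' by (simp add: c'_def)
    hence "(-1) ^ (m * t) * (\<Prod>k\<in>{1..m}. inverse (\<Prod>j\<in>{k..<k + s}. q (j mod m))) = 1"
      using c0nz by (metis mult_right_cancel)
    hence "(-1) ^ (m * t) * inverse (\<Prod>k\<in>{1..m}. \<Prod>j\<in>{k..<k + s}. q (j mod m)) = 1"
      using prod_inversef[of "\<lambda>k. \<Prod>j\<in>{k..<k + s}. q (j mod m)" "{1..m}"] by (simp add: comp_def)
    thus ?thesis using inv_eq window2[OF m0 assms(2)] by simp
  qed
  have sumeq: "(\<lambda>r. z r - (\<Sum>i<m. c i * conv m (pv (gam m i s)) (pv (dlt m i t)) r)) = (\<lambda>r. z r - Y r)"
  proof
    fix r
    have "(\<Sum>i<m. c i * conv m (pv (gam m i s)) (pv (dlt m i t)) r) = Y r"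
      unfolding Y_def by (intro sum.cong refl) (auto simp: gam_dlt[OF _ st] Cc)
    thus "z r - (\<Sum>i<m. c i * conv m (pv (gam m i s)) (pv (dlt m i t)) r) = z r - Y r" by simp
  qed
  have call: "\<forall>i<m. c i = c' i" using Cc by metis
  have G1: "(\<lambda>r. z r - (\<Sum>i<m. c i * conv m (pv (gam m i s)) (pv (dlt m i t)) r)) \<in> IdE m q"
    using sumeq zY by simp
  have G2: "\<forall>i<m. c i = (-1) ^ (i * t) * (\<Prod>k\<in>{1..i}. inverse (\<Prod>j\<in>{k..<k + s}. q (j mod m))) * c0"
    using call unfolding c'_def by blast
  show ?thesis
    apply (rule exI[of _ s], rule exI[of _ t], rule exI[of _ c0])
    unfolding Let_def
    using c0nz st G1 G2 Z1 Z2 unfolding c_def by blast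
qed


end
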